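(* Assume $m=2$, i.e. $\Theta=\{\theta_1,\theta_2\}$, and $\mathcal{W}^{\theta_1}\neq\mathcal{W}^{\theta_2}$. Then there exist distributions $\xi,\eta\in\Delta_1^2$ with $\xi\neq\eta$ and $\xi_1>\eta_1$ such that: (i) for every $\mu\in[0,1]$, with $\varphi_\mu=\mu\varphi^{\theta_1}+(1-\mu)\xi$, one has $\mathcal{W}^{\varphi_\mu}=\mathcal{W}^{\theta_1}$; and (ii) for every $\lambda\in(0,1)$, with $\varphi_\lambda=\lambda\xi+(1-\lambda)\eta$, there exists $f\in\mathcal{W}^{\varphi_\lambda}$ with $f\in\mathcal{F}_{\mathrm{inf}}$.
   Context: Let $\mathcal{G}=(\mathcal{V},\mathcal{E})$ be a finite directed graph with an origin $v_o$ and a destination $v_d$, and let $\mathcal{P}$ be the (finite) set of acyclic directed paths from $v_o$ to $v_d$, $n=|\mathcal{P}|$. The set of feasible path-flows is $\mathcal{H}=\{f\in\mathbb{R}^n_{\ge0}:\sum_{p\in\mathcal{P}}f_p=1\}$. For a path-flow $f$, the flow on edge $e_k$ is $f_{e_k}=\sum_{p\ni e_k}f_p$. There is a finite set of states $\Theta=\{\theta_1,\dots,\theta_m\}$; in each state $\theta_s$ each edge $e_k$ has a known cost function $C^{\theta_s}_{e_k}:\mathbb{R}_{\ge0}\to\mathbb{R}_{\ge0}$ that is continuous and strictly increasing. The cost of path $p$ in state $\theta_s$ is $C^{\theta_s}_p(f)=\sum_{e_k\in p}C^{\theta_s}_{e_k}(f_{e_k})$. For $\varphi\in\Delta_1^m:=\{x\in\mathbb{R}^m_{\ge0}:\sum_i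 x_i=1\}$ the expected cost of path $p$ is $C^\varphi_p(f)=\sum_{s}\varphi_sC^{\theta_s}_p(f)$. A flow $f\in\mathcal{H}$ is a $\varphi$-based Wardrop equilibrium ($\varphi$-WE) if for all $p$ with $f_p>0$ we have $C^\varphi_p(f)\le C^\varphi_r(f)$ for all $r\in\mathcal{P}$; $\mathcal{W}^\varphi$ denotes the set of $\varphi$-WE. For each $s$, $\varphi^{\theta_s}\in\Delta_1^m$ is the distribution with $\varphi^{\theta_s}_s=1$, and $\mathcal{W}^{\theta_s}:=\mathcal{W}^{\varphi^{\theta_s}}$. For $\varphi\in\Delta_1^m$, $\mathcal{R}^{\mathrm{use}}_\varphi=\{p\in\mathcal{P}:\exists f\in\mathcal{W}^\varphi,\ f_p>0\}$. In the two-state case, the set of informative flows is $$\mathcal{F}_{\mathrm{inf}}=\{f\in\mathcal{H}: f\notin\mathcal{W}^{\theta_1}\cup\mathcal{W}^{\theta_2},\ f_p>0\ \text{for all } p\in\mathcal{R}^{\mathrm{use}}_{\varphi^{\theta_1}}\}.$$ *)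

theory Defs
  imports "HOL-Analysis.Analysis"
begin

(* Directed (multi)graph: edge set E :: 'e set, each edge e has tail src e and head dst e.
   A path is a list of edges; its vertex sequence is vo # map dst es. *)

definition path_verts :: "('e \<Rightarrow> 'v) \<Rightarrow> 'v \<Rightarrow> 'e list \<Rightarrow> 'v list" where
  "path_verts dst vo es = vo # map dst es"

definition od_paths :: "('e \<Rightarrow> 'v) \<Rightarrow> ('e \<Rightarrow> 'v) \<Rightarrow> 'e set \<Rightarrow> 'v \<Rightarrow> 'v \<Rightarrow> 'e list set" where
  "od_paths src dst E vo vd =
     {es. set es \<subseteq> E
        \<and> (\<forall>i<length es. src (es ! i) = path_verts dst vo es ! i)
        \<and> last (path_verts dst vo es) = vd
        \<and> distinct (path_verts dst vo es)}"

definition feasible_flows :: "'e list set \<Rightarrow> ('e list \<Rightarrow> real) set" where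
  "feasible_flows P = {f. (\<forall>p\<in>P. f p \<ge> 0) \<and> (\<forall>p. p \<notin> P \<longrightarrow> f p = 0) \<and> (\<Sum>p\<in>P. f p) = 1}"

definition edge_flow :: "'e list set \<Rightarrow> ('e list \<Rightarrow> real) \<Rightarrow> 'e \<Rightarrow> real" where
  "edge_flow P f e = (\<Sum>p\<in>{p\<in>P. e \<in> set p}. f p)"

(* cost of path p in state s: C s e is the cost function of edge e in state theta_s *)
definition path_cost :: "(nat \<Rightarrow> 'e \<Rightarrow> real \<Rightarrow> real) \<Rightarrow> 'e list set \<Rightarrow> nat \<Rightarrow> 'e list \<Rightarrow> ('e list \<Rightarrow> real) \<Rightarrow> real" where
  "path_cost C P s p f = sum_list (map (\<lambda>e. C s e (edge_flow P f e)) p)"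

definition exp_cost :: "nat \<Rightarrow> (nat \<Rightarrow> 'e \<Rightarrow> real \<Rightarrow> real) \<Rightarrow> 'e list set \<Rightarrow> (nat \<Rightarrow> real) \<Rightarrow> 'e list \<Rightarrow> ('e list \<Rightarrow> real) \<Rightarrow> real" where
  "exp_cost m C P \<phi> p f = (\<Sum>s=1..m. \<phi> s * path_cost C P s p f)"

definition prob_simplex :: "nat \<Rightarrow> (nat \<Rightarrow> real) set" where
  "prob_simplex m = {\<phi>. (\<forall>i\<in>{1..m}. \<phi> i \<ge> 0) \<and> (\<forall>i. i \<notin> {1..m} \<longrightarrow> \<phi> i = 0) \<and> (\<Sum>i=1..m. \<phi> i) = 1}"

definition point_dist :: "nat \<Rightarrow> nat \<Rightarrow> real" where
  "point_dist s = (\<lambda>i. if i = s then 1 else 0)"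

definition WE :: "nat \<Rightarrow> (nat \<Rightarrow> 'e \<Rightarrow> real \<Rightarrow> real) \<Rightarrow> 'e list set \<Rightarrow> (nat \<Rightarrow> real) \<Rightarrow> ('e list \<Rightarrow> real) set" where
  "WE m C P \<phi> = {f \<in> feasible_flows P. \<forall>p\<in>P. f p > 0 \<longrightarrow> (\<forall>r\<in>P. exp_cost m C P \<phi> p f \<le> exp_cost m C P \<phi> r f)}"

definition R_use :: "nat \<Rightarrow> (nat \<Rightarrow> 'e \<Rightarrow> real \<Rightarrow> real) \<Rightarrow> 'e list set \<Rightarrow> (nat \<Rightarrow> real) \<Rightarrow> 'e list set" where
  "R_use m C P \<phi> = {p\<in>P. \<exists>f\<in>WE m C P \<phi>. f p > 0}"

definition F_inf :: "(nat \<Rightarrow> 'e \<Rightarrow> real \<Rightarrow> real) \<Rightarrow> 'e list set \<Rightarrow> ('e list \<Rightarrow> real) set" where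
  "F_inf C P = {f \<in> feasible_flows P.
      f \<notin> WE 2 C P (point_dist 1) \<union> WE 2 C P (point_dist 2)
      \<and> (\<forall>p\<in>R_use 2 C P (point_dist 1). f p > 0)}"

end

theory Submission
  imports Defs
begin

primrec wk :: "('e \<Rightarrow> 'v) \<Rightarrow> ('e \<Rightarrow> 'v) \<Rightarrow> 'e set \<Rightarrow> 'v \<Rightarrow> 'e list \<Rightarrow> 'v \<Rightarrow> bool" where
  "wk src dst E u [] w = (u = w)"
| "wk src dst E u (e#es) w = (e \<in> E \<and> src e = u \<and> wk src dst E (dst e) es w)"

lemma pv_Cons: "path_verts dst u (e#es) = u # path_verts dst (dst e) es"
  by (simp add: path_verts_def)

lemma pv_len: "length (path_verts dst u es) = Suc (length es)"
  by (simp add: path_verts_def)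

lemma pv_ne: "path_verts dst u es \<noteq> []"
  by (simp add: path_verts_def)

lemma pv_append: "path_verts dst u (xs@ys) = path_verts dst u xs @ map dst ys"
  by (simp add: path_verts_def)

lemma od_aux: "(set es \<subseteq> E \<and> (\<forall>i<length es. src (es!i) = path_verts dst u es ! i)
    \<and> last (path_verts dst u es) = w) \<longleftrightarrow> wk src dst E u es w"
proof (induction es arbitrary: u)
  case Nil show ?case by (simp add: path_verts_def)
next
  case (Cons e es)
  have "(\<forall>i<length (e#es). src ((e#es)!i) = path_verts dst u (e#es) ! i) \<longleftrightarrow>
     src e = u \<and> (\<forall>i<length es. src (es!i) = path_verts dst (dst e) es ! i)"
    by (auto simp: pv_Cons less_Suc_eq_0_disj)
  moreover have "last (path_verts dst u (e#es)) = last (path_verts dst (dst e) es)"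
    by (simp add: path_verts_def)
  ultimately show ?case using Cons.IH[of "dst e"] by auto
qed

lemma od_paths_eq: "od_paths src dst E vo vd = {es. wk src dst E vo es vd \<and> distinct (path_verts dst vo es)}"
proof (rule set_eqI)
  fix es
  have "es \<in> od_paths src dst E vo vd \<longleftrightarrow> (set es \<subseteq> E \<and> (\<forall>i<length es. src (es!i) = path_verts dst vo es ! i)
    \<and> last (path_verts dst vo es) = vd) \<and> distinct (path_verts dst vo es)"
    by (simp add: od_paths_def)
  also have "\<dots> \<longleftrightarrow> wk src dst E vo es vd \<and> distinct (path_verts dst vo es)"
    using od_aux[of es E src dst vo vd] by simp
  finally show "es \<in> od_paths src dst E vo vd \<longleftrightarrow> es \<in> {es. wk src dst E vo es vd \<and> distinct (path_verts dst vo es)}" by simp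
qed

lemma wk_append: "wk src dst E u (xs@ys) w \<longleftrightarrow> (\<exists>v. wk src dst E u xs v \<and> wk src dst E v ys w)"
  by (induction xs arbitrary: u) auto

lemma wk_set: "wk src dst E u es w \<Longrightarrow> set es \<subseteq> E"
  by (induction es arbitrary: u) auto

lemma wk_last: "wk src dst E u es w \<Longrightarrow> last (path_verts dst u es) = w"
  using od_aux[of es E src dst u w] by simp

lemma wk_src_nth: "wk src dst E u es w \<Longrightarrow> i < length es \<Longrightarrow> src (es!i) = path_verts dst u es ! i"
  using od_aux[of es E src dst u w] by simp

lemma distinct_pv_edges: "distinct (path_verts dst u es) \<Longrightarrow> distinct es"
  by (auto simp: path_verts_def distinct_map)

lemma wk_split_vertex: "wk src dst E u es w \<Longrightarrow> v \<in> set (path_verts dst u es) \<Longrightarrow>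
   \<exists>as bs. es = as @ bs \<and> wk src dst E u as v \<and> wk src dst E v bs w"
proof (induction es arbitrary: u)
  case Nil thus ?case by (auto simp: path_verts_def)
next
  case (Cons e es)
  show ?case
  proof (cases "v = u")
    case True thus ?thesis using Cons.prems by (intro exI[of _ "[]"] exI[of _ "e#es"]) simp
  next
    case False
    hence "v \<in> set (path_verts dst (dst e) es)" using Cons.prems by (simp add: pv_Cons)
    then obtain as bs where "es = as @ bs" "wk src dst E (dst e) as v" "wk src dst E v bs w"
      using Cons.IH[of "dst e"] Cons.prems by auto
    thus ?thesis using Cons.prems by (intro exI[of _ "e#as"] exI[of _ bs]) simp
  qed
qed

lemma wk_cycle: "wk src dst E u w v \<Longrightarrow> \<not> distinct (path_verts dst u w) \<Longrightarrow>
  \<exists>xs ys zs z. w = xs@ys@zs \<and> ys \<noteq> [] \<and> wk src dst E u xs z \<and> wk src dst E z ys z \<and> wk src dst E z zs v"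
proof (induction w arbitrary: u)
  case Nil thus ?case by (simp add: path_verts_def)
next
  case (Cons e es)
  show ?case
  proof (cases "u \<in> set (path_verts dst (dst e) es)")
    case True
    then obtain as bs where "es = as @ bs" "wk src dst E (dst e) as u" "wk src dst E u bs v"
      using wk_split_vertex[of src dst E "dst e" es v u] Cons.prems by auto
    thus ?thesis using Cons.prems
      by (intro exI[of _ "[]"] exI[of _ "e#as"] exI[of _ bs] exI[of _ u]) simp
  next
    case False
    hence "\<not> distinct (path_verts dst (dst e) es)" using Cons.prems by (simp add: pv_Cons)
    then obtain xs ys zs z where "es = xs@ys@zs" "ys \<noteq> []" "wk src dst E (dst e) xs z"
        "wk src dst E z ys z" "wk src dst E z zs v"
      using Cons.IH[of "dst e"] Cons.prems by auto
    thus ?thesis using Cons.prems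
      by (intro exI[of _ "e#xs"] exI[of _ ys] exI[of _ zs] exI[of _ z]) simp
  qed
qed

lemma cycle_removal:
  fixes g :: "'e \<Rightarrow> real"
  assumes "wk src dst E u w v" "\<forall>e\<in>set w. g e > 0"
  shows "\<exists>w'. wk src dst E u w' v \<and> distinct (path_verts dst u w') \<and> set w' \<subseteq> set w
     \<and> sum_list (map g w') \<le> sum_list (map g w)
     \<and> (\<not> distinct (path_verts dst u w) \<longrightarrow> sum_list (map g w') < sum_list (map g w))"
  using assms
proof (induction "length w" arbitrary: w rule: less_induct)
  case less
  show ?case
  proof (cases "distinct (path_verts dst u w)")
    case True thus ?thesis using less.prems by (intro exI[of _ w]) auto
  next
    case False
    then obtain xs ys zs z where d: "w = xs@ys@zs" "ys \<noteq> []" "wk src dst E u xs z"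
        "wk src dst E z ys z" "wk src dst E z zs v"
      using wk_cycle less.prems by metis
    define w2 where "w2 = xs @ zs"
    have l: "length w2 < length w" using d by (simp add: w2_def)
    have wk2: "wk src dst E u w2 v" using d by (auto simp: w2_def wk_append)
    have pos2: "\<forall>e\<in>set w2. g e > 0" using less.prems d by (auto simp: w2_def)
    obtain w' where w': "wk src dst E u w' v" "distinct (path_verts dst u w')" "set w' \<subseteq> set w2"
       "sum_list (map g w') \<le> sum_list (map g w2)"
      using less.hyps[OF l wk2 pos2] by blast
    have "sum_list (map g ys) > 0"
    proof -
      obtain y ys' where "ys = y # ys'" using d(2) by (cases ys) auto
      moreover have "\<forall>e\<in>set ys'. g e > 0" using less.prems d \<open>ys = y # ys'\<close> by auto
      hence "sum_list (map g ys') \<ge> 0"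
        by (intro sum_list_nonneg) (auto intro: less_imp_le)
      moreover have "g y > 0" using less.prems d \<open>ys = y # ys'\<close> by auto
      ultimately show ?thesis by simp
    qed
    hence "sum_list (map g w2) < sum_list (map g w)" using d by (simp add: w2_def)
    thus ?thesis using w' d by (intro exI[of _ w']) (auto simp: w2_def)
  qed
qed

lemma wk_at_edge: "wk src dst E u q v \<Longrightarrow> l < length q \<Longrightarrow>
   wk src dst E u (take l q) (src (q!l)) \<and> wk src dst E (dst (q!l)) (drop (Suc l) q) v"
proof -
  assume a: "wk src dst E u q v" "l < length q"
  have "q = take l q @ (q!l) # drop (Suc l) q" using a(2) by (simp add: id_take_nth_drop)
  then obtain z where "wk src dst E u (take l q) z" "wk src dst E z ((q!l) # drop (Suc l) q) v"
    using a(1) wk_append by metis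
  thus ?thesis by auto
qed

lemma wk_consec: "wk src dst E u p v \<Longrightarrow> Suc j < length p \<Longrightarrow> src (p ! Suc j) = dst (p ! j)"
  by (simp add: wk_src_nth path_verts_def)

lemma wk_first: "wk src dst E u p v \<Longrightarrow> 0 < length p \<Longrightarrow> src (p ! 0) = u"
  by (simp add: wk_src_nth path_verts_def)

lemma wk_lastedge: "wk src dst E u p v \<Longrightarrow> p \<noteq> [] \<Longrightarrow> dst (p ! (length p - 1)) = v"
  using wk_last[of src dst E u p v] by (simp add: path_verts_def last_map last_conv_nth)

lemma pre_empty: "wk src dst E vo q vd \<Longrightarrow> distinct (path_verts dst vo q) \<Longrightarrow> l < length q \<Longrightarrow>
   src (q!l) = vo \<Longrightarrow> l = 0"
proof -
  assume a: "wk src dst E vo q vd" "distinct (path_verts dst vo q)" "l < length q" "src (q!l) = vo"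
  have "path_verts dst vo q ! l = path_verts dst vo q ! 0"
    using wk_src_nth[OF a(1) a(3)] a(4) by (simp add: path_verts_def)
  moreover have "l < length (path_verts dst vo q)" "0 < length (path_verts dst vo q)"
    using a(3) by (simp_all add: path_verts_def)
  ultimately show ?thesis using nth_eq_iff_index_eq[OF a(2)] by blast
qed

lemma suf_empty: "wk src dst E vo q vd \<Longrightarrow> distinct (path_verts dst vo q) \<Longrightarrow> l < length q \<Longrightarrow>
   dst (q!l) = vd \<Longrightarrow> Suc l = length q"
proof -
  assume a: "wk src dst E vo q vd" "distinct (path_verts dst vo q)" "l < length q" "dst (q!l) = vd"
  have "last (path_verts dst vo q) = vd" using wk_last[OF a(1)] .
  moreover have "last (path_verts dst vo q) = path_verts dst vo q ! length q"
    using last_conv_nth[of "path_verts dst vo q"] by (simp add: pv_len pv_ne)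
  ultimately have "path_verts dst vo q ! length q = vd" by simp
  moreover have "path_verts dst vo q ! Suc l = vd" using a(3,4) by (simp add: path_verts_def)
  ultimately have "path_verts dst vo q ! Suc l = path_verts dst vo q ! length q" by simp
  moreover have "Suc l < length (path_verts dst vo q)" "length q < length (path_verts dst vo q)"
    using a(3) by (simp_all add: pv_len)
  ultimately show ?thesis using nth_eq_iff_index_eq[OF a(2)] by blast
qed

lemma finite_od: "finite E \<Longrightarrow> finite (od_paths src dst E vo vd)"
proof -
  assume f: "finite E"
  have "od_paths src dst E vo vd \<subseteq> {xs. set xs \<subseteq> E \<and> length xs \<le> card E}"
  proof
    fix es assume "es \<in> od_paths src dst E vo vd"
    hence w: "wk src dst E vo es vd" "distinct es" using od_paths_eq distinct_pv_edges by fastforce+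
    hence "set es \<subseteq> E" using wk_set by metis
    moreover have "length es \<le> card E" using w(2) \<open>set es \<subseteq> E\<close> f
      by (metis card_mono distinct_card)
    ultimately show "es \<in> {xs. set xs \<subseteq> E \<and> length xs \<le> card E}" by simp
  qed
  thus ?thesis using finite_lists_length_le[OF f] finite_subset by blast
qed

lemma od_nil: "[] \<in> od_paths src dst E vo vd \<Longrightarrow> od_paths src dst E vo vd = {[]}"
proof -
  assume n: "[] \<in> od_paths src dst E vo vd"
  hence "vo = vd" by (simp add: od_paths_eq path_verts_def)
  have "es = []" if "es \<in> od_paths src dst E vo vd" for es
  proof (rule ccontr)
    assume "es \<noteq> []"
    have "wk src dst E vo es vd" "distinct (path_verts dst vo es)" using that od_paths_eq by fastforce+
    hence "last (path_verts dst vo es) = vo" using wk_last \<open>vo = vd\<close> by metis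
    hence "vo \<in> set (map dst es)" using \<open>es \<noteq> []\<close> last_in_set[of "map dst es"] by (simp add: path_verts_def)
    thus False using \<open>distinct (path_verts dst vo es)\<close> by (simp add: path_verts_def)
  qed
  thus ?thesis using n by blast
qed



lemma sum12: "(\<Sum>s=1..2::nat. h s) = h 1 + (h 2 :: real)"
  by (simp add: numeral_2_eq_2)

lemma WE_min:
  assumes "finite P'" "f \<in> WE m C P' \<phi>"
  shows "\<exists>M. (\<forall>\<pi>\<in>P'. f \<pi> > 0 \<longrightarrow> exp_cost m C P' \<phi> \<pi> f = M) \<and> (\<forall>r\<in>P'. M \<le> exp_cost m C P' \<phi> r f)"
proof -
  have feas: "f \<in> feasible_flows P'" using assms(2) by (simp add: WE_def)
  have "\<exists>\<pi>0\<in>P'. f \<pi>0 > 0"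
  proof (rule ccontr)
    assume "\<not> ?thesis"
    hence "\<forall>\<pi>\<in>P'. f \<pi> \<le> 0" by auto
    hence "(\<Sum>\<pi>\<in>P'. f \<pi>) \<le> 0" by (simp add: sum_nonpos)
    thus False using feas by (simp add: feasible_flows_def)
  qed
  then obtain \<pi>0 where p0: "\<pi>0 \<in> P'" "f \<pi>0 > 0" by blast
  have eq: "\<forall>\<pi>\<in>P'. f \<pi> > 0 \<longrightarrow> (\<forall>r\<in>P'. exp_cost m C P' \<phi> \<pi> f \<le> exp_cost m C P' \<phi> r f)"
    using assms(2) by (simp add: WE_def)
  show ?thesis
    apply (rule exI[of _ "exp_cost m C P' \<phi> \<pi>0 f"])
    using eq p0 by (meson order_antisym)
qed

lemma WE_sum_M:
  assumes "finite P'" "f \<in> WE m C P' \<phi>" "\<forall>\<pi>\<in>P'. f \<pi> > 0 \<longrightarrow> exp_cost m C P' \<phi> \<pi> f = M"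
  shows "(\<Sum>\<pi>\<in>P'. f \<pi> * exp_cost m C P' \<phi> \<pi> f) = M"
proof -
  have feas: "f \<in> feasible_flows P'" using assms(2) by (simp add: WE_def)
  have "(\<Sum>\<pi>\<in>P'. f \<pi> * exp_cost m C P' \<phi> \<pi> f) = (\<Sum>\<pi>\<in>P'. f \<pi> * M)"
  proof (rule sum.cong)
    fix \<pi> assume "\<pi> \<in> P'"
    hence "f \<pi> \<ge> 0" using feas by (simp add: feasible_flows_def)
    thus "f \<pi> * exp_cost m C P' \<phi> \<pi> f = f \<pi> * M" using assms(3) \<open>\<pi> \<in> P'\<close>
      by (cases "f \<pi> > 0") auto
  qed simp
  also have "\<dots> = M" using feas by (simp add: feasible_flows_def sum_distrib_right[symmetric])
  finally show ?thesis .
qed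

lemma EI:
  assumes "finite P'" "f \<in> WE m C P' \<phi>" "h \<in> feasible_flows P'"
  shows "(\<Sum>\<pi>\<in>P'. f \<pi> * exp_cost m C P' \<phi> \<pi> f) \<le> (\<Sum>\<pi>\<in>P'. h \<pi> * exp_cost m C P' \<phi> \<pi> f)"
proof -
  obtain M where M: "\<forall>\<pi>\<in>P'. f \<pi> > 0 \<longrightarrow> exp_cost m C P' \<phi> \<pi> f = M" "\<forall>r\<in>P'. M \<le> exp_cost m C P' \<phi> r f"
    using WE_min[OF assms(1,2)] by blast
  have "(\<Sum>\<pi>\<in>P'. f \<pi> * exp_cost m C P' \<phi> \<pi> f) = M" using WE_sum_M[OF assms(1,2) M(1)] .
  also have "M = (\<Sum>\<pi>\<in>P'. h \<pi> * M)" using assms(3) by (simp add: feasible_flows_def sum_distrib_right[symmetric])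
  also have "\<dots> \<le> (\<Sum>\<pi>\<in>P'. h \<pi> * exp_cost m C P' \<phi> \<pi> f)"
    using assms(3) M(2) by (intro sum_mono mult_left_mono) (auto simp: feasible_flows_def)
  finally show ?thesis .
qed

lemma prod_mono_nonneg:
  fixes c :: "real \<Rightarrow> real"
  assumes "\<And>u w. 0 \<le> u \<Longrightarrow> u \<le> w \<Longrightarrow> c u \<le> c w" "0 \<le> x" "0 \<le> y"
  shows "0 \<le> (x - y) * (c x - c y)"
proof (cases "x \<le> y")
  case True
  hence "c x \<le> c y" using assms by auto
  thus ?thesis using True by (intro mult_nonpos_nonpos) auto
next
  case False
  hence "c y \<le> c x" using assms by auto
  thus ?thesis using False by (intro mult_nonneg_nonneg) auto
qed

definition pd :: "real \<Rightarrow> nat \<Rightarrow> real" where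
  "pd b = (\<lambda>i. if i = 1 then b else if i = 2 then 1 - b else 0)"

locale net =
  fixes src dst :: "'e \<Rightarrow> 'v" and E :: "'e set" and vo vd :: 'v
    and C :: "nat \<Rightarrow> 'e \<Rightarrow> real \<Rightarrow> real"
  assumes finE: "finite E"
    and costs: "\<forall>s\<in>{1,2}. \<forall>e\<in>E. continuous_on {0..} (C s e)
            \<and> strict_mono_on {0..} (C s e) \<and> (\<forall>x\<ge>0. C s e x \<ge> 0)"
begin

abbreviation "P \<equiv> od_paths src dst E vo vd"
abbreviation "ef f e \<equiv> edge_flow P f e"
abbreviation "Wa b \<equiv> WE 2 C P (pd b)"
definition cb :: "real \<Rightarrow> 'e \<Rightarrow> real \<Rightarrow> real" where
  "cb b e z = b * C 1 e z + (1 - b) * C 2 e z"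

lemma finP: "finite P" using finite_od[OF finE] .

lemma P_props: "\<pi> \<in> P \<Longrightarrow> wk src dst E vo \<pi> vd \<and> distinct (path_verts dst vo \<pi>) \<and> distinct \<pi> \<and> set \<pi> \<subseteq> E"
proof -
  assume "\<pi> \<in> P"
  hence w: "wk src dst E vo \<pi> vd" "distinct (path_verts dst vo \<pi>)" by (simp_all add: od_paths_eq)
  thus ?thesis using distinct_pv_edges[OF w(2)] wk_set[OF w(1)] by simp
qed

lemma exp_cost_gen: "exp_cost 2 C P \<phi> \<pi> f = \<phi> 1 * path_cost C P 1 \<pi> f + \<phi> 2 * path_cost C P 2 \<pi> f"
  unfolding exp_cost_def by (rule sum12)

lemma WE_cong: "\<phi> 1 = \<psi> 1 \<Longrightarrow> \<phi> 2 = \<psi> 2 \<Longrightarrow> WE 2 C P \<phi> = WE 2 C P \<psi>"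
  by (simp add: WE_def exp_cost_gen)

lemma ec_list: "exp_cost 2 C P (pd b) \<pi> f = sum_list (map (\<lambda>e. cb b e (ef f e)) \<pi>)"
  by (simp add: exp_cost_gen pd_def path_cost_def cb_def sum_list_addf sum_list_const_mult)

lemma ec_set: "\<pi> \<in> P \<Longrightarrow> exp_cost 2 C P (pd b) \<pi> f = (\<Sum>e\<in>set \<pi>. cb b e (ef f e))"
  using ec_list[of b \<pi> f] sum_list_distinct_conv_sum_set[of \<pi>] P_props[of \<pi>] by simp

lemma C_props: "s \<in> {1,2} \<Longrightarrow> e \<in> E \<Longrightarrow> continuous_on {0..} (C s e)
            \<and> strict_mono_on {0..} (C s e) \<and> (\<forall>x\<ge>0. C s e x \<ge> 0)"
  using costs by blast

lemma C_strict: "s \<in> {1,2} \<Longrightarrow> e \<in> E \<Longrightarrow> 0 \<le> x \<Longrightarrow> x < y \<Longrightarrow> C s e x < C s e y"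
  using C_props by (simp add: strict_mono_on_def)

lemma C_mono: "s \<in> {1,2} \<Longrightarrow> e \<in> E \<Longrightarrow> 0 \<le> x \<Longrightarrow> x \<le> y \<Longrightarrow> C s e x \<le> C s e y"
  using C_strict[of s e x y] by (cases "x = y") auto

lemma C_nonneg: "s \<in> {1,2} \<Longrightarrow> e \<in> E \<Longrightarrow> 0 \<le> x \<Longrightarrow> 0 \<le> C s e x"
  using C_props by blast

lemma cb_cont: "e \<in> E \<Longrightarrow> continuous_on {0..} (cb b e)"
  unfolding cb_def using C_props[of 1 e] C_props[of 2 e] by (intro continuous_intros) auto

lemma cb_mono: "b \<in> {0..1} \<Longrightarrow> e \<in> E \<Longrightarrow> 0 \<le> x \<Longrightarrow> x \<le> y \<Longrightarrow> cb b e x \<le> cb b e y"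
  unfolding cb_def using C_mono[of 1 e x y] C_mono[of 2 e x y]
  by (intro add_mono mult_left_mono) auto

lemma cb_strict: "b \<in> {0..1} \<Longrightarrow> e \<in> E \<Longrightarrow> 0 \<le> x \<Longrightarrow> x < y \<Longrightarrow> cb b e x < cb b e y"
proof -
  assume a: "b \<in> {0..1}" "e \<in> E" "0 \<le> x" "x < y"
  have 1: "C 1 e x < C 1 e y" "C 2 e x < C 2 e y" using C_strict a by auto
  show ?thesis
  proof (cases "b > 0")
    case True
    have "b * C 1 e x < b * C 1 e y" using True 1 by simp
    moreover have "(1-b) * C 2 e x \<le> (1-b) * C 2 e y" using a 1 by (intro mult_left_mono) auto
    ultimately show ?thesis by (simp add: cb_def)
  next
    case False
    hence "b = 0" using a by auto
    thus ?thesis using 1 by (simp add: cb_def)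
  qed
qed

lemma cb_nonneg: "b \<in> {0..1} \<Longrightarrow> e \<in> E \<Longrightarrow> 0 \<le> x \<Longrightarrow> 0 \<le> cb b e x"
  unfolding cb_def using C_nonneg[of 1 e x] C_nonneg[of 2 e x] by simp

lemma cb_diff: "cb a e x - cb b e x = (a - b) * (C 1 e x - C 2 e x)"
  by (simp add: cb_def algebra_simps)

lemma ef_alt: "ef f e = (\<Sum>\<pi>\<in>P. if e \<in> set \<pi> then f \<pi> else 0)"
  by (simp add: edge_flow_def sum.inter_filter[OF finP])

lemma feas_nonneg: "f \<in> feasible_flows P \<Longrightarrow> \<pi> \<in> P \<Longrightarrow> 0 \<le> f \<pi>"
  by (simp add: feasible_flows_def)

lemma feas_sum: "f \<in> feasible_flows P \<Longrightarrow> (\<Sum>\<pi>\<in>P. f \<pi>) = 1"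
  by (simp add: feasible_flows_def)

lemma ef_nonneg: "f \<in> feasible_flows P \<Longrightarrow> 0 \<le> ef f e"
  unfolding edge_flow_def by (intro sum_nonneg) (auto simp: feasible_flows_def)

lemma ef_le1: "f \<in> feasible_flows P \<Longrightarrow> ef f e \<le> 1"
proof -
  assume f: "f \<in> feasible_flows P"
  have "ef f e \<le> (\<Sum>\<pi>\<in>P. f \<pi>)" unfolding edge_flow_def
    using f finP by (intro sum_mono2) (auto simp: feasible_flows_def)
  thus ?thesis using f by (simp add: feasible_flows_def)
qed

lemma ef_ge_path: "f \<in> feasible_flows P \<Longrightarrow> \<pi> \<in> P \<Longrightarrow> e \<in> set \<pi> \<Longrightarrow> f \<pi> \<le> ef f e"
  unfolding edge_flow_def using finP
  by (intro member_le_sum) (auto simp: feasible_flows_def)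

lemma ID:
  assumes "h \<in> feasible_flows P"
  shows "(\<Sum>\<pi>\<in>P. h \<pi> * exp_cost 2 C P (pd b) \<pi> k) = (\<Sum>e\<in>E. ef h e * cb b e (ef k e))"
proof -
  let ?u = "\<lambda>e. cb b e (ef k e)"
  have "(\<Sum>\<pi>\<in>P. h \<pi> * exp_cost 2 C P (pd b) \<pi> k) = (\<Sum>\<pi>\<in>P. \<Sum>e\<in>E. (if e \<in> set \<pi> then h \<pi> else 0) * ?u e)"
  proof (rule sum.cong)
    fix \<pi> assume p: "\<pi> \<in> P"
    have "h \<pi> * exp_cost 2 C P (pd b) \<pi> k = (\<Sum>e\<in>set \<pi>. h \<pi> * ?u e)"
      using ec_set[OF p] by (simp add: sum_distrib_left)
    also have "\<dots> = (\<Sum>e\<in>E. if e \<in> set \<pi> then h \<pi> * ?u e else 0)"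
      using sum.inter_restrict[OF finE, of "\<lambda>e. h \<pi> * ?u e" "set \<pi>"] P_props[OF p]
      by (simp add: Int_absorb1)
    also have "\<dots> = (\<Sum>e\<in>E. (if e \<in> set \<pi> then h \<pi> else 0) * ?u e)"
      by (intro sum.cong refl) simp
    finally show "h \<pi> * exp_cost 2 C P (pd b) \<pi> k = (\<Sum>e\<in>E. (if e \<in> set \<pi> then h \<pi> else 0) * ?u e)" .
  qed simp
  also have "\<dots> = (\<Sum>e\<in>E. \<Sum>\<pi>\<in>P. (if e \<in> set \<pi> then h \<pi> else 0) * ?u e)" by (rule sum.swap)
  also have "\<dots> = (\<Sum>e\<in>E. ef h e * ?u e)"
    by (simp add: ef_alt sum_distrib_right)
  finally show ?thesis .
qed

lemma Bprime:
  assumes f: "f \<in> Wa b" and g: "g \<in> feasible_flows P" and eq: "\<forall>e\<in>E. ef g e = ef f e"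
  shows "g \<in> Wa b"
proof -
  have ff: "f \<in> feasible_flows P" using f by (simp add: WE_def)
  obtain M where M: "\<forall>\<pi>\<in>P. f \<pi> > 0 \<longrightarrow> exp_cost 2 C P (pd b) \<pi> f = M"
      "\<forall>r\<in>P. M \<le> exp_cost 2 C P (pd b) r f"
    using WE_min[OF finP f] by blast
  have ceq: "exp_cost 2 C P (pd b) \<pi> g = exp_cost 2 C P (pd b) \<pi> f" if "\<pi> \<in> P" for \<pi>
  proof -
    have "set \<pi> \<subseteq> E" using P_props[OF that] by simp
    hence "(\<Sum>e\<in>set \<pi>. cb b e (ef g e)) = (\<Sum>e\<in>set \<pi>. cb b e (ef f e))"
      using eq by (intro sum.cong refl) auto
    thus ?thesis using ec_set[OF that, of b g] ec_set[OF that, of b f] by simp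
  qed
  have "(\<Sum>\<pi>\<in>P. g \<pi> * exp_cost 2 C P (pd b) \<pi> f) = (\<Sum>e\<in>E. ef g e * cb b e (ef f e))" using ID[OF g] .
  also have "\<dots> = (\<Sum>e\<in>E. ef f e * cb b e (ef f e))" using eq by (intro sum.cong refl) simp
  also have "\<dots> = (\<Sum>\<pi>\<in>P. f \<pi> * exp_cost 2 C P (pd b) \<pi> f)" using ID[OF ff, of b f] by (rule sym)
  also have "\<dots> = M" using WE_sum_M[OF finP f M(1)] .
  finally have s1: "(\<Sum>\<pi>\<in>P. g \<pi> * exp_cost 2 C P (pd b) \<pi> f) = M" .
  have "(\<Sum>\<pi>\<in>P. g \<pi> * (exp_cost 2 C P (pd b) \<pi> f - M)) = (\<Sum>\<pi>\<in>P. g \<pi> * exp_cost 2 C P (pd b) \<pi> f - M * g \<pi>)"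
    by (intro sum.cong refl) (simp add: algebra_simps)
  also have "\<dots> = (\<Sum>\<pi>\<in>P. g \<pi> * exp_cost 2 C P (pd b) \<pi> f) - M * (\<Sum>\<pi>\<in>P. g \<pi>)"
    by (simp only: sum_subtractf sum_distrib_left)
  also have "\<dots> = 0" using s1 feas_sum[OF g] by simp
  finally have z: "(\<Sum>\<pi>\<in>P. g \<pi> * (exp_cost 2 C P (pd b) \<pi> f - M)) = 0" .
  have nn: "\<forall>\<pi>\<in>P. 0 \<le> g \<pi> * (exp_cost 2 C P (pd b) \<pi> f - M)"
  proof
    fix \<pi> assume p: "\<pi> \<in> P"
    have "0 \<le> g \<pi>" using feas_nonneg[OF g p] .
    moreover have "0 \<le> exp_cost 2 C P (pd b) \<pi> f - M" using M(2) p by simp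
    ultimately show "0 \<le> g \<pi> * (exp_cost 2 C P (pd b) \<pi> f - M)" by (rule mult_nonneg_nonneg)
  qed
  have zz: "\<forall>\<pi>\<in>P. g \<pi> * (exp_cost 2 C P (pd b) \<pi> f - M) = 0"
    using sum_nonneg_eq_0_iff[OF finP, of "\<lambda>\<pi>. g \<pi> * (exp_cost 2 C P (pd b) \<pi> f - M)"] nn z by blast
  have gWE: "\<forall>\<pi>\<in>P. g \<pi> > 0 \<longrightarrow> (\<forall>r\<in>P. exp_cost 2 C P (pd b) \<pi> g \<le> exp_cost 2 C P (pd b) r g)"
  proof (intro ballI impI)
    fix \<pi> r assume p: "\<pi> \<in> P" "g \<pi> > 0" "r \<in> P"
    have "g \<pi> * (exp_cost 2 C P (pd b) \<pi> f - M) = 0" using zz p(1) by blast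
    hence "exp_cost 2 C P (pd b) \<pi> f = M" using p(2) by simp
    thus "exp_cost 2 C P (pd b) \<pi> g \<le> exp_cost 2 C P (pd b) r g"
      using ceq[OF p(1)] ceq[OF p(3)] M(2) p(3) by simp
  qed
  show ?thesis unfolding WE_def using g gWE by blast
qed

lemma VI:
  assumes f: "f \<in> Wa a" and g: "g \<in> Wa b"
  shows "(\<Sum>e\<in>E. (ef f e - ef g e) * (cb a e (ef f e) - cb b e (ef g e))) \<le> 0"
proof -
  have ff: "f \<in> feasible_flows P" using f by (simp add: WE_def)
  have gg: "g \<in> feasible_flows P" using g by (simp add: WE_def)
  have 1: "(\<Sum>e\<in>E. ef f e * cb a e (ef f e)) \<le> (\<Sum>e\<in>E. ef g e * cb a e (ef f e))"
    using EI[OF finP f gg] ID[OF ff, of a f] ID[OF gg, of a f] by linarith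
  have 2: "(\<Sum>e\<in>E. ef g e * cb b e (ef g e)) \<le> (\<Sum>e\<in>E. ef f e * cb b e (ef g e))"
    using EI[OF finP g ff] ID[OF ff, of b g] ID[OF gg, of b g] by linarith
  have "(\<Sum>e\<in>E. (ef f e - ef g e) * (cb a e (ef f e) - cb b e (ef g e))) =
     (\<Sum>e\<in>E. ef f e * cb a e (ef f e)) - (\<Sum>e\<in>E. ef g e * cb a e (ef f e))
     + ((\<Sum>e\<in>E. ef g e * cb b e (ef g e)) - (\<Sum>e\<in>E. ef f e * cb b e (ef g e)))"
  proof -
    have "(\<Sum>e\<in>E. (ef f e - ef g e) * (cb a e (ef f e) - cb b e (ef g e))) =
      (\<Sum>e\<in>E. (ef f e * cb a e (ef f e) - ef g e * cb a e (ef f e)) + (ef g e * cb b e (ef g e) - ef f e * cb b e (ef g e)))"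
      by (intro sum.cong refl) (simp add: algebra_simps)
    also have "\<dots> = (\<Sum>e\<in>E. ef f e * cb a e (ef f e)) - (\<Sum>e\<in>E. ef g e * cb a e (ef f e))
     + ((\<Sum>e\<in>E. ef g e * cb b e (ef g e)) - (\<Sum>e\<in>E. ef f e * cb b e (ef g e)))" by (simp only: sum.distrib sum_subtractf)
    finally show ?thesis .
  qed
  thus ?thesis using 1 2 by linarith
qed

lemma U:
  assumes a: "a \<in> {0..1}" and f: "f \<in> Wa a" and g: "g \<in> Wa a"
  shows "\<forall>e\<in>E. ef f e = ef g e"
proof
  fix e0 assume e0: "e0 \<in> E"
  have ff: "f \<in> feasible_flows P" using f by (simp add: WE_def)
  have gg: "g \<in> feasible_flows P" using g by (simp add: WE_def)
  have nn: "\<forall>e\<in>E. 0 \<le> (ef f e - ef g e) * (cb a e (ef f e) - cb a e (ef g e))"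
  proof
    fix e assume e: "e \<in> E"
    show "0 \<le> (ef f e - ef g e) * (cb a e (ef f e) - cb a e (ef g e))"
      by (rule prod_mono_nonneg[of "cb a e"]) (auto intro: cb_mono[OF a e] ef_nonneg[OF ff] ef_nonneg[OF gg])
  qed
  have "(\<Sum>e\<in>E. (ef f e - ef g e) * (cb a e (ef f e) - cb a e (ef g e))) = 0"
  proof -
    have "0 \<le> (\<Sum>e\<in>E. (ef f e - ef g e) * (cb a e (ef f e) - cb a e (ef g e)))"
      using nn by (intro sum_nonneg) auto
    thus ?thesis using VI[OF f g] by linarith
  qed
  hence "(ef f e0 - ef g e0) * (cb a e0 (ef f e0) - cb a e0 (ef g e0)) = 0"
    using sum_nonneg_eq_0_iff[OF finE, of "\<lambda>e. (ef f e - ef g e) * (cb a e (ef f e) - cb a e (ef g e))"] nn e0 by blast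
  moreover have "ef f e0 \<noteq> ef g e0 \<Longrightarrow> cb a e0 (ef f e0) \<noteq> cb a e0 (ef g e0)"
  proof -
    assume ne: "ef f e0 \<noteq> ef g e0"
    show ?thesis
    proof (cases "ef f e0 < ef g e0")
      case True thus ?thesis using cb_strict[OF a e0 ef_nonneg[OF ff]] by fastforce
    next
      case False hence "ef g e0 < ef f e0" using ne by auto
      thus ?thesis using cb_strict[OF a e0 ef_nonneg[OF gg]] by fastforce
    qed
  qed
  ultimately show "ef f e0 = ef g e0" by auto
qed

end


lemma integral_ineq:
  fixes c :: "real \<Rightarrow> real"
  assumes cc: "continuous_on {0..} c" and mono: "\<And>u w. 0 \<le> u \<Longrightarrow> u \<le> w \<Longrightarrow> c u \<le> c w"
    and x: "0 \<le> x" and y: "0 \<le> y"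
  shows "integral {0..y} c - integral {0..x} c \<le> (y - x) * c y"
proof -
  have int: "c integrable_on {a..b}" if "0 \<le> a" for a b
    using that by (intro integrable_continuous_real continuous_on_subset[OF cc]) auto
  show ?thesis
  proof (cases "x \<le> y")
    case True
    have "integral {0..x} c + integral {x..y} c = integral {0..y} c"
      using Henstock_Kurzweil_Integration.integral_combine[OF x True int[of 0 y, simplified]] by simp
    moreover have "integral {x..y} c \<le> integral {x..y} (\<lambda>_. c y)"
      using True x by (intro integral_le int) (auto intro: mono)
    moreover have "integral {x..y} (\<lambda>_. c y) = (y - x) * c y" using True by simp
    ultimately show ?thesis by linarith
  next
    case False
    have "integral {0..y} c + integral {y..x} c = integral {0..x} c"
      using Henstock_Kurzweil_Integration.integral_combine[OF y _ int[of 0 x, simplified]] False by simp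
    moreover have "integral {y..x} (\<lambda>_. c y) \<le> integral {y..x} c"
      using False y by (intro integral_le int) (auto intro: mono)
    moreover have "integral {y..x} (\<lambda>_. c y) = (x - y) * c y" using False by simp
    ultimately show ?thesis by (simp add: algebra_simps)
  qed
qed

lemma sum_ind_sub:
  fixes u :: "'a \<Rightarrow> real"
  assumes "finite E" "A \<subseteq> E"
  shows "(\<Sum>e\<in>E. (if e \<in> A then 1 else 0) * u e) = sum u A"
proof -
  have "(\<Sum>e\<in>E. (if e \<in> A then 1 else 0) * u e) = (\<Sum>e\<in>E. if e \<in> A then u e else 0)"
    by (intro sum.cong refl) simp
  also have "\<dots> = sum u (E \<inter> A)" using sum.inter_restrict[OF assms(1)] by metis
  also have "E \<inter> A = A" using assms(2) by blast
  finally show ?thesis .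
qed

context net begin

lemma ef_cont: "continuous_on S (\<lambda>f. ef f e)"
  unfolding edge_flow_def
  by (intro continuous_on_sum continuous_on_subset[OF continuous_on_product_coordinates]) auto

lemma exists_WE:
  assumes b: "b \<in> {0..1}" and Pne: "P \<noteq> {}"
  shows "\<exists>f. f \<in> Wa b"
proof -
  define S where "S \<pi> = (if \<pi> \<in> P then {0..1::real} else {0})" for \<pi>
  define K where "K = feasible_flows P"
  have K_eq: "K = PiE UNIV S \<inter> {f. (\<Sum>\<pi>\<in>P. f \<pi>) = 1}"
  proof (rule set_eqI)
    fix f :: "'e list \<Rightarrow> real"
    show "f \<in> K \<longleftrightarrow> f \<in> PiE UNIV S \<inter> {f. (\<Sum>\<pi>\<in>P. f \<pi>) = 1}"
    proof
      assume f: "f \<in> K"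
      hence ff: "f \<in> feasible_flows P" by (simp add: K_def)
      have "f \<pi> \<in> S \<pi>" for \<pi>
      proof (cases "\<pi> \<in> P")
        case True
        have "f \<pi> \<le> (\<Sum>\<pi>\<in>P. f \<pi>)" using True finP ff
          by (intro member_le_sum) (auto simp: feasible_flows_def)
        thus ?thesis using True ff by (auto simp: S_def feasible_flows_def)
      next
        case False thus ?thesis using ff by (auto simp: S_def feasible_flows_def)
      qed
      thus "f \<in> PiE UNIV S \<inter> {f. (\<Sum>\<pi>\<in>P. f \<pi>) = 1}" using ff
        by (auto simp: PiE_def feasible_flows_def)
    next
      assume "f \<in> PiE UNIV S \<inter> {f. (\<Sum>\<pi>\<in>P. f \<pi>) = 1}"
      hence "\<forall>\<pi>. f \<pi> \<in> S \<pi>" "(\<Sum>\<pi>\<in>P. f \<pi>) = 1" by (auto simp: PiE_def Pi_def)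
      thus "f \<in> K" unfolding K_def feasible_flows_def S_def
        by (auto split: if_splits)
    qed
  qed
  have "compactin (product_topology (\<lambda>i. euclidean) UNIV) (PiE UNIV S)"
    by (subst compactin_PiE) (auto simp: S_def)
  hence "compactin euclidean (PiE UNIV S)" by (simp only: euclidean_product_topology)
  hence "compact (PiE UNIV S)" by (simp add: compactin_euclidean_iff)
  moreover have "closed {f::'e list \<Rightarrow> real. (\<Sum>\<pi>\<in>P. f \<pi>) = 1}"
    by (intro closed_Collect_eq continuous_on_sum continuous_on_product_coordinates continuous_on_const)
  ultimately have Kc: "compact K" unfolding K_eq by (rule compact_Int_closed)
  obtain \<pi>0 where p0: "\<pi>0 \<in> P" using Pne by blast
  have "(\<lambda>\<pi>. if \<pi> = \<pi>0 then 1 else 0) \<in> K"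
    unfolding K_def feasible_flows_def using p0 finP by (auto simp: sum.delta)
  hence Kne: "K \<noteq> {}" by blast
  define \<Phi> where "\<Phi> f = (\<Sum>e\<in>E. integral {0..ef f e} (cb b e))" for f
  have Phic: "continuous_on K \<Phi>" unfolding \<Phi>_def
  proof (intro continuous_on_sum)
    fix e assume e: "e \<in> E"
    have "continuous_on {0..1} (\<lambda>z. integral {0..z} (cb b e))"
      by (intro indefinite_integral_continuous_1 integrable_continuous_real
             continuous_on_subset[OF cb_cont[OF e]]) auto
    moreover have "(\<lambda>f. ef f e) ` K \<subseteq> {0..1}"
      using ef_nonneg ef_le1 by (auto simp: K_def)
    ultimately show "continuous_on K (\<lambda>f. integral {0..ef f e} (cb b e))"
      using continuous_on_compose2[OF _ ef_cont] by blast
  qed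
  obtain f where f: "f \<in> K" and fmin: "\<forall>g\<in>K. \<Phi> f \<le> \<Phi> g"
    using continuous_attains_inf[OF Kc Kne Phic] by blast
  have ff: "f \<in> feasible_flows P" using f by (simp add: K_def)
  have "\<forall>\<pi>\<in>P. f \<pi> > 0 \<longrightarrow> (\<forall>r\<in>P. exp_cost 2 C P (pd b) \<pi> f \<le> exp_cost 2 C P (pd b) r f)"
  proof (intro ballI impI)
    fix \<pi> r assume p: "\<pi> \<in> P" "f \<pi> > 0" "r \<in> P"
    show "exp_cost 2 C P (pd b) \<pi> f \<le> exp_cost 2 C P (pd b) r f"
    proof (rule ccontr)
      assume "\<not> ?thesis"
      hence lt: "exp_cost 2 C P (pd b) r f < exp_cost 2 C P (pd b) \<pi> f" by simp
      hence rp: "r \<noteq> \<pi>" by auto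
      define ind where "ind (x::'e list) \<rho> = (if \<rho> = x then 1 else (0::real))" for x \<rho>
      define g where "g \<epsilon> = (\<lambda>\<rho>. f \<rho> + \<epsilon> * (ind r \<rho> - ind \<pi> \<rho>))" for \<epsilon>
      define \<delta> where "\<delta> e = (if e \<in> set r then 1 else 0) - (if e \<in> set \<pi> then 1 else (0::real))" for e
      have sind: "(\<Sum>\<rho>\<in>A. ind x \<rho>) = (if x \<in> A then 1 else 0)" if "finite A" for A x
        unfolding ind_def using sum.delta[OF that, of x "\<lambda>_. 1"] by simp
      have gfeas: "g \<epsilon> \<in> K" if "\<epsilon> \<in> {0..f \<pi>}" for \<epsilon>
      proof -
        have "g \<epsilon> \<rho> \<ge> 0" if "\<rho> \<in> P" for \<rho>
          using feas_nonneg[OF ff that] \<open>\<epsilon> \<in> {0..f \<pi>}\<close> rp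
          by (auto simp: g_def ind_def)
        moreover have "g \<epsilon> \<rho> = 0" if "\<rho> \<notin> P" for \<rho>
          using that p ff by (auto simp: g_def ind_def feasible_flows_def)
        moreover have "(\<Sum>\<rho>\<in>P. g \<epsilon> \<rho>) = 1"
          using feas_sum[OF ff] sind[OF finP] p
          by (simp add: g_def sum.distrib sum_distrib_left[symmetric] sum_subtractf)
        ultimately show ?thesis by (simp add: K_def feasible_flows_def)
      qed
      have gef: "ef (g \<epsilon>) e = ef f e + \<epsilon> * \<delta> e" for \<epsilon> e
      proof -
        have fin: "finite {\<rho> \<in> P. e \<in> set \<rho>}" using finP by simp
        have "ef (g \<epsilon>) e = ef f e + \<epsilon> * ((\<Sum>\<rho>\<in>{\<rho> \<in> P. e \<in> set \<rho>}. ind r \<rho>) - (\<Sum>\<rho>\<in>{\<rho> \<in> P. e \<in> set \<rho>}. ind \<pi> \<rho>))"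
          by (simp add: edge_flow_def g_def sum.distrib sum_distrib_left[symmetric] sum_subtractf)
        thus ?thesis using sind[OF fin] p by (simp add: \<delta>_def)
      qed
      define h where "h \<epsilon> = (\<Sum>e\<in>set r. cb b e (ef f e + \<epsilon> * \<delta> e)) - (\<Sum>e\<in>set \<pi>. cb b e (ef f e + \<epsilon> * \<delta> e))" for \<epsilon>
      have hec: "h \<epsilon> = exp_cost 2 C P (pd b) r (g \<epsilon>) - exp_cost 2 C P (pd b) \<pi> (g \<epsilon>)" for \<epsilon>
        unfolding h_def using ec_set[OF p(1)] ec_set[OF p(3)] gef by simp
      have g0: "g 0 = f" by (simp add: g_def)
      have h0: "h 0 < 0" using hec[of 0] g0 lt by simp
      have argnn: "ef f e + \<epsilon> * \<delta> e \<ge> 0" if "\<epsilon> \<in> {0..f \<pi>}" for \<epsilon> e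
        using gef[of \<epsilon> e] ef_nonneg gfeas[OF that] by (metis K_def)
      have hc: "continuous_on {0..f \<pi>} h"
      proof -
        have cont1: "continuous_on {0..f \<pi>} (\<lambda>\<epsilon>. cb b e (ef f e + \<epsilon> * \<delta> e))" if "e \<in> E" for e
          by (rule continuous_on_compose2[OF cb_cont[OF that]])
             (auto intro!: continuous_intros argnn)
        show ?thesis unfolding h_def
          using P_props[OF p(1)] P_props[OF p(3)] cont1
          by (intro continuous_intros) auto
      qed
      obtain d where d: "d > 0" "\<forall>x'\<in>{0..f \<pi>}. dist x' 0 < d \<longrightarrow> dist (h x') (h 0) < - h 0"
        using hc[unfolded continuous_on_iff] p(2) h0 by (metis atLeastAtMost_iff neg_0_less_iff_less order_refl less_imp_le)
      define \<epsilon> where "\<epsilon> = min (d/2) (f \<pi>)"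
      have eps: "\<epsilon> > 0" "\<epsilon> \<in> {0..f \<pi>}" "dist \<epsilon> 0 < d" using d p(2) by (auto simp: \<epsilon>_def)
      have hneg: "h \<epsilon> < 0" using d(2) eps by (auto simp: dist_real_def)
      have "\<Phi> (g \<epsilon>) - \<Phi> f = (\<Sum>e\<in>E. integral {0..ef (g \<epsilon>) e} (cb b e) - integral {0..ef f e} (cb b e))"
        by (simp add: \<Phi>_def sum_subtractf)
      also have "\<dots> \<le> (\<Sum>e\<in>E. (ef (g \<epsilon>) e - ef f e) * cb b e (ef (g \<epsilon>) e))"
      proof (rule sum_mono)
        fix e assume e: "e \<in> E"
        show "integral {0..ef (g \<epsilon>) e} (cb b e) - integral {0..ef f e} (cb b e) \<le> (ef (g \<epsilon>) e - ef f e) * cb b e (ef (g \<epsilon>) e)"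
          using gfeas[OF eps(2)] by (intro integral_ineq cb_cont[OF e] cb_mono[OF b e] ef_nonneg ff) (auto simp: K_def)
      qed
      also have "\<dots> = \<epsilon> * (\<Sum>e\<in>E. \<delta> e * cb b e (ef f e + \<epsilon> * \<delta> e))"
        by (simp add: gef sum_distrib_left mult.assoc)
      also have "(\<Sum>e\<in>E. \<delta> e * cb b e (ef f e + \<epsilon> * \<delta> e)) = h \<epsilon>"
      proof -
        have "(\<Sum>e\<in>E. \<delta> e * cb b e (ef f e + \<epsilon> * \<delta> e)) =
          (\<Sum>e\<in>E. (if e \<in> set r then 1 else 0) * cb b e (ef f e + \<epsilon> * \<delta> e)) -
          (\<Sum>e\<in>E. (if e \<in> set \<pi> then 1 else 0) * cb b e (ef f e + \<epsilon> * \<delta> e))"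
          unfolding \<delta>_def by (simp add: left_diff_distrib sum_subtractf)
        thus ?thesis unfolding h_def using sum_ind_sub[OF finE] P_props[OF p(1)] P_props[OF p(3)] by simp
      qed
      finally have "\<Phi> (g \<epsilon>) - \<Phi> f \<le> \<epsilon> * h \<epsilon>" .
      moreover have "\<epsilon> * h \<epsilon> < 0" using eps(1) hneg by (simp add: mult_pos_neg)
      moreover have "\<Phi> f \<le> \<Phi> (g \<epsilon>)" using fmin gfeas[OF eps(2)] by blast
      ultimately show False by linarith
    qed
  qed
  thus ?thesis using ff unfolding WE_def by blast
qed

end


lemma splice_sum:
  fixes g :: "'e \<Rightarrow> real"
  assumes lp: "length p = Suc k'" and QL: "\<forall>j<Suc k'. L j < length (Q j) \<and> Q j ! L j = p ! j"
    and e0: "take (L 0) (Q 0) = []" and e1: "drop (Suc (L k')) (Q k') = []"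
  shows "(\<Sum>j<Suc k'. sum_list (map g (Q j))) = sum_list (map g p)
     + (\<Sum>j<k'. sum_list (map g (take (L (Suc j)) (Q (Suc j)) @ drop (Suc (L j)) (Q j))))"
proof -
  define pre where "pre j = sum_list (map g (take (L j) (Q j)))" for j
  define suf where "suf j = sum_list (map g (drop (Suc (L j)) (Q j)))" for j
  have dec: "sum_list (map g (Q j)) = pre j + g (p!j) + suf j" if "j < Suc k'" for j
  proof -
    have "Q j = take (L j) (Q j) @ (Q j ! L j) # drop (Suc (L j)) (Q j)"
      using QL that id_take_nth_drop[of "L j" "Q j"] by simp
    hence "sum_list (map g (Q j)) = sum_list (map g (take (L j) (Q j) @ (Q j ! L j) # drop (Suc (L j)) (Q j)))"
      by simp
    thus ?thesis using QL that by (simp add: pre_def suf_def)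
  qed
  have "(\<Sum>j<Suc k'. sum_list (map g (Q j))) = (\<Sum>j<Suc k'. pre j + g (p!j) + suf j)"
    using dec by (intro sum.cong) auto
  also have "\<dots> = (\<Sum>j<Suc k'. pre j) + (\<Sum>j<Suc k'. g (p!j)) + (\<Sum>j<Suc k'. suf j)"
    by (simp add: sum.distrib)
  also have "(\<Sum>j<Suc k'. pre j) = pre 0 + (\<Sum>j<k'. pre (Suc j))" by (rule sum.lessThan_Suc_shift)
  also have "(\<Sum>j<Suc k'. suf j) = (\<Sum>j<k'. suf j) + suf k'" by (rule sum.lessThan_Suc)
  also have "(\<Sum>j<Suc k'. g (p!j)) = sum_list (map g p)"
    using lp by (simp add: sum_list_sum_nth atLeast0LessThan)
  also have "pre 0 = 0" unfolding pre_def e0 by simp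
  also have "suf k' = 0" unfolding suf_def e1 by simp
  finally have 1: "(\<Sum>j<Suc k'. sum_list (map g (Q j))) = sum_list (map g p) + ((\<Sum>j<k'. pre (Suc j)) + (\<Sum>j<k'. suf j))"
    by simp
  have "(\<Sum>j<k'. sum_list (map g (take (L (Suc j)) (Q (Suc j)) @ drop (Suc (L j)) (Q j)))) = (\<Sum>j<k'. pre (Suc j) + suf j)"
    by (simp add: pre_def suf_def)
  also have "\<dots> = (\<Sum>j<k'. pre (Suc j)) + (\<Sum>j<k'. suf j)" by (rule sum.distrib)
  finally show ?thesis using 1 by simp
qed

definition ind :: "'a \<Rightarrow> 'a \<Rightarrow> real" where "ind x y = (if y = x then 1 else 0)"

lemma sum_ind: "finite A \<Longrightarrow> (\<Sum>y\<in>A. ind x y) = (if x \<in> A then 1 else 0)"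
  unfolding ind_def using sum.delta[of A x "\<lambda>_. 1::real"] by simp

lemma sum_list_ind_edge: "distinct xs \<Longrightarrow> sum_list (map (\<lambda>e'. if e' = e then 1 else (0::real)) xs) = (if e \<in> set xs then 1 else 0)"
  by (simp add: sum_list_distinct_conv_sum_set sum.delta')

context net begin

lemma ef_pos_path: "f \<in> feasible_flows P \<Longrightarrow> ef f e > 0 \<Longrightarrow> \<exists>q\<in>P. f q > 0 \<and> e \<in> set q"
proof (rule ccontr)
  assume a: "f \<in> feasible_flows P" "ef f e > 0" "\<not> (\<exists>q\<in>P. f q > 0 \<and> e \<in> set q)"
  hence "\<forall>q\<in>{q\<in>P. e \<in> set q}. f q \<le> 0" by auto
  hence "ef f e \<le> 0" unfolding edge_flow_def by (intro sum_nonpos) auto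
  thus False using a(2) by simp
qed

lemma cc_pos: "a \<in> {0..1} \<Longrightarrow> e \<in> E \<Longrightarrow> 0 < z \<Longrightarrow> 0 < cb a e z"
  using cb_strict[of a e 0 z] cb_nonneg[of a e 0] by simp

lemma splice:
  assumes a: "a \<in> {0..1}" and f: "f \<in> Wa a" and p: "p \<in> P" and pos: "\<forall>e\<in>set p. ef f e > 0"
  shows "\<exists>f'. f' \<in> Wa a \<and> f' p > 0 \<and> (\<forall>e\<in>E. ef f' e = ef f e)"
proof (cases "f p > 0")
  case True thus ?thesis using f by blast
next
  case False
  have ff: "f \<in> feasible_flows P" using f by (simp add: WE_def)
  have fp0: "f p = 0" using False feas_nonneg[OF ff p] by simp
  have pne: "p \<noteq> []"
  proof
    assume "p = []"
    hence "P = {[]}" using od_nil p by metis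
    hence "f [] = 1" using feas_sum[OF ff] by simp
    thus False using fp0 \<open>p = []\<close> by simp
  qed
  obtain k' where lp: "length p = Suc k'" using pne by (cases p) auto
  define k where "k = Suc k'"
  have wp: "wk src dst E vo p vd" "distinct (path_verts dst vo p)" using P_props[OF p] by auto
  have "\<forall>j. \<exists>ql. j < k \<longrightarrow> (fst ql \<in> P \<and> f (fst ql) > 0 \<and> snd ql < length (fst ql) \<and> fst ql ! snd ql = p ! j)"
  proof
    fix j show "\<exists>ql. j < k \<longrightarrow> (fst ql \<in> P \<and> f (fst ql) > 0 \<and> snd ql < length (fst ql) \<and> fst ql ! snd ql = p ! j)"
    proof (cases "j < k")
      case True
      hence "p ! j \<in> set p" using lp by (simp add: k_def)
      then obtain q where q: "q \<in> P" "f q > 0" "p ! j \<in> set q" using ef_pos_path[OF ff] pos by blast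
      then obtain l where "l < length q" "q ! l = p ! j" by (metis in_set_conv_nth)
      thus ?thesis using q by (intro exI[of _ "(q,l)"]) auto
    qed simp
  qed
  then obtain ql where ql: "\<forall>j<k. fst (ql j) \<in> P \<and> f (fst (ql j)) > 0 \<and> snd (ql j) < length (fst (ql j)) \<and> fst (ql j) ! snd (ql j) = p ! j"
    by metis
  define Q where "Q j = fst (ql j)" for j
  define L where "L j = snd (ql j)" for j
  have QL: "\<forall>j<k. Q j \<in> P \<and> f (Q j) > 0 \<and> L j < length (Q j) \<and> Q j ! L j = p ! j"
    using ql by (simp add: Q_def L_def)
  define r where "r j = take (L (Suc j)) (Q (Suc j)) @ drop (Suc (L j)) (Q j)" for j
  have wQ: "wk src dst E vo (Q j) vd" "distinct (path_verts dst vo (Q j))" if "j < k" for j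
    using P_props QL that by auto
  have wpre: "wk src dst E vo (take (L j) (Q j)) (src (p!j))" if "j < k" for j
    using wk_at_edge[OF wQ(1)[OF that], of "L j"] QL that by auto
  have wsuf: "wk src dst E (dst (p!j)) (drop (Suc (L j)) (Q j)) vd" if "j < k" for j
    using wk_at_edge[OF wQ(1)[OF that], of "L j"] QL that by auto
  have wr: "wk src dst E vo (r j) vd" if "j < k'" for j
  proof -
    have "src (p ! Suc j) = dst (p ! j)" using wk_consec[OF wp(1)] that lp by simp
    thus ?thesis unfolding r_def wk_append using wpre[of "Suc j"] wsuf[of j] that
      by (auto simp: k_def)
  qed
  have e0: "take (L 0) (Q 0) = []"
  proof -
    have "src (p!0) = vo" using wk_first[OF wp(1)] lp by simp
    hence "L 0 = 0" using pre_empty[OF wQ(1) wQ(2), of 0 "L 0"] QL by (auto simp: k_def)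
    thus ?thesis by simp
  qed
  have e1: "drop (Suc (L k')) (Q k') = []"
  proof -
    have "dst (p!k') = vd" using wk_lastedge[OF wp(1) pne] lp by simp
    hence "Suc (L k') = length (Q k')" using suf_empty[OF wQ(1) wQ(2), of k' "L k'"] QL by (auto simp: k_def)
    thus ?thesis by simp
  qed
  have QL': "\<forall>j<Suc k'. L j < length (Q j) \<and> Q j ! L j = p ! j" using QL by (simp add: k_def)
  note ident = splice_sum[OF lp QL' e0 e1, folded r_def]
  define cc where "cc e = cb a e (ef f e)" for e
  have Gec: "sum_list (map cc \<pi>) = exp_cost 2 C P (pd a) \<pi> f" for \<pi>
    by (simp add: ec_list cc_def[abs_def])
  obtain M where M: "\<forall>\<pi>\<in>P. f \<pi> > 0 \<longrightarrow> exp_cost 2 C P (pd a) \<pi> f = M"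
      "\<forall>r\<in>P. M \<le> exp_cost 2 C P (pd a) r f"
    using WE_min[OF finP f] by blast
  have GQ: "sum_list (map cc (Q j)) = M" if "j < k" for j using QL M(1) that Gec by auto
  have Gp: "M \<le> sum_list (map cc p)" using M(2) p Gec by auto
  have rsub: "set (r j) \<subseteq> set (Q (Suc j)) \<union> set (Q j)" for j
    unfolding r_def using set_take_subset set_drop_subset by fastforce
  have ccpos: "\<forall>e\<in>set (r j). cc e > 0" if jk: "j < k'" for j
  proof
    fix e assume e: "e \<in> set (r j)"
    have "e \<in> set (Q (Suc j)) \<or> e \<in> set (Q j)" using rsub[of j] e by blast
    then obtain i where i: "i < k" "e \<in> set (Q i)" using jk unfolding k_def by (metis Suc_mono less_SucI)
    have "e \<in> E" using P_props QL i by blast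
    moreover have "0 < f (Q i)" using QL i by auto
    hence "0 < ef f e" using ef_ge_path[OF ff, of "Q i" e] QL i by force
    ultimately show "cc e > 0" unfolding cc_def using cc_pos[OF a] by blast
  qed
  have rge: "M \<le> sum_list (map cc (r j)) \<and> (\<not> distinct (path_verts dst vo (r j)) \<longrightarrow> M < sum_list (map cc (r j)))"
    if jk: "j < k'" for j
  proof -
    obtain w' where w': "wk src dst E vo w' vd" "distinct (path_verts dst vo w')"
      "sum_list (map cc w') \<le> sum_list (map cc (r j))"
      "\<not> distinct (path_verts dst vo (r j)) \<longrightarrow> sum_list (map cc w') < sum_list (map cc (r j))"
      using cycle_removal[OF wr[OF jk] ccpos[OF jk]] by blast
    have "w' \<in> P" using w' by (simp add: od_paths_eq)
    hence "M \<le> sum_list (map cc w')" using M(2) Gec by auto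
    thus ?thesis using w' by auto
  qed
  have rP: "r j \<in> P" if "j < k'" for j
  proof (rule ccontr)
    assume "r j \<notin> P"
    hence nd: "\<not> distinct (path_verts dst vo (r j))" using wr[OF that] by (simp add: od_paths_eq)
    have "(\<Sum>j<k'. M) < (\<Sum>j<k'. sum_list (map cc (r j)))"
      using rge nd that by (intro sum_strict_mono_ex1) auto
    moreover have "(\<Sum>j<Suc k'. sum_list (map cc (Q j))) = (\<Sum>j<Suc k'. M)"
      using GQ by (intro sum.cong) (auto simp: k_def)
    ultimately have "(1 + real k') * M = sum_list (map cc p) + (\<Sum>j<k'. sum_list (map cc (r j)))"
      "real k' * M < (\<Sum>j<k'. sum_list (map cc (r j)))" using ident[of cc] by simp_all
    thus False using Gp by (simp add: algebra_simps)
  qed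
  define D where "D \<rho> = ind p \<rho> + (\<Sum>j<k'. ind (r j) \<rho>) - (\<Sum>j<k. ind (Q j) \<rho>)" for \<rho>
  define m0 where "m0 = Min ((\<lambda>j. f (Q j)) ` {..<k})"
  have m0pos: "m0 > 0" unfolding m0_def using QL by (subst Min_gr_iff) (auto simp: k_def)
  have m0le: "m0 \<le> f (Q j)" if "j < k" for j unfolding m0_def using that by (intro Min_le) auto
  define \<epsilon> where "\<epsilon> = m0 / real k"
  have epos: "\<epsilon> > 0" using m0pos by (simp add: \<epsilon>_def k_def)
  have ek: "\<epsilon> * real k = m0" by (simp add: \<epsilon>_def k_def)
  define f' where "f' \<rho> = f \<rho> + \<epsilon> * D \<rho>" for \<rho>
  have indnn: "0 \<le> ind x y" for x y :: "'e list" by (simp add: ind_def)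
  have sumQle: "(\<Sum>j<k. ind (Q j) \<rho>) \<le> real k" for \<rho>
    using sum_bounded_above[of "{..<k}" "\<lambda>j. ind (Q j) \<rho>" 1] by (simp add: ind_def)
  have f'nn: "0 \<le> f' \<rho>" if "\<rho> \<in> P" for \<rho>
  proof (cases "\<exists>j<k. Q j = \<rho>")
    case True
    then obtain j where j: "j < k" "Q j = \<rho>" by blast
    have "m0 \<le> f \<rho>" using m0le[OF j(1)] j by simp
    moreover have "- real k \<le> D \<rho>" unfolding D_def
      using sumQle[of \<rho>] indnn sum_nonneg[of "{..<k'}" "\<lambda>j. ind (r j) \<rho>"] by (smt (verit))
    hence "- m0 \<le> \<epsilon> * D \<rho>" using epos ek by (metis mult_le_cancel_left_pos mult_minus_right)
    ultimately show ?thesis by (simp add: f'_def)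
  next
    case False
    hence "(\<Sum>j<k. ind (Q j) \<rho>) = 0" by (intro sum.neutral) (auto simp: ind_def)
    hence "0 \<le> D \<rho>" unfolding D_def
      using indnn sum_nonneg[of "{..<k'}" "\<lambda>j. ind (r j) \<rho>"] by (smt (verit))
    thus ?thesis using feas_nonneg[OF ff that] epos by (simp add: f'_def)
  qed
  have f'out: "f' \<rho> = 0" if "\<rho> \<notin> P" for \<rho>
  proof -
    have "p \<noteq> \<rho>" "\<forall>j<k'. r j \<noteq> \<rho>" "\<forall>j<k. Q j \<noteq> \<rho>" using that p rP QL by auto
    hence "(\<Sum>j<k'. ind (r j) \<rho>) = 0" "(\<Sum>j<k. ind (Q j) \<rho>) = 0" "ind p \<rho> = 0"
      by (auto simp: ind_def intro!: sum.neutral)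
    hence "D \<rho> = 0" unfolding D_def by simp
    thus ?thesis using ff that by (simp add: f'_def feasible_flows_def)
  qed
  have sumD: "(\<Sum>\<rho>\<in>A. D \<rho>) = (if p \<in> A then 1 else 0) + (\<Sum>j<k'. if r j \<in> A then 1 else 0)
        - (\<Sum>j<k. if Q j \<in> A then 1 else 0)" if "finite A" for A
  proof -
    have "(\<Sum>\<rho>\<in>A. D \<rho>) = (\<Sum>\<rho>\<in>A. ind p \<rho>) + (\<Sum>j<k'. \<Sum>\<rho>\<in>A. ind (r j) \<rho>) - (\<Sum>j<k. \<Sum>\<rho>\<in>A. ind (Q j) \<rho>)"
      unfolding D_def by (simp add: sum.distrib sum_subtractf sum.swap[of _ A])
    thus ?thesis using sum_ind[OF that] by simp
  qed
  have "(\<Sum>\<rho>\<in>P. D \<rho>) = 1 + real k' - real k"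
    using sumD[OF finP] p rP QL by simp
  hence sD0: "(\<Sum>\<rho>\<in>P. D \<rho>) = 0" by (simp add: k_def)
  have f'feas: "f' \<in> feasible_flows P"
  proof -
    have "(\<Sum>\<rho>\<in>P. f' \<rho>) = (\<Sum>\<rho>\<in>P. f \<rho>) + \<epsilon> * (\<Sum>\<rho>\<in>P. D \<rho>)"
      by (simp add: f'_def sum.distrib sum_distrib_left)
    thus ?thesis using sD0 feas_sum[OF ff] f'nn f'out by (simp add: feasible_flows_def)
  qed
  have f'ef: "ef f' e = ef f e" if "e \<in> E" for e
  proof -
    define A where "A = {\<rho> \<in> P. e \<in> set \<rho>}"
    have finA: "finite A" using finP by (simp add: A_def)
    define ge where "ge e' = (if e' = e then 1 else (0::real))" for e'
    have inA: "(if x \<in> A then 1 else 0) = sum_list (map ge x)" if "x \<in> P" for x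
      using sum_list_ind_edge[of x e] P_props[OF that] that by (simp add: A_def ge_def[abs_def])
    have "(\<Sum>\<rho>\<in>A. D \<rho>) = sum_list (map ge p) + (\<Sum>j<k'. sum_list (map ge (r j)))
        - (\<Sum>j<k. sum_list (map ge (Q j)))"
      using sumD[OF finA] inA p rP QL by simp
    also have "\<dots> = 0" using ident[of ge] by (simp add: k_def)
    finally have "(\<Sum>\<rho>\<in>A. D \<rho>) = 0" .
    moreover have "ef f' e = ef f e + \<epsilon> * (\<Sum>\<rho>\<in>A. D \<rho>)"
      by (simp add: edge_flow_def A_def f'_def sum.distrib sum_distrib_left)
    ultimately show ?thesis by simp
  qed
  have "D p \<ge> 1"
  proof -
    have "\<forall>j<k. Q j \<noteq> p" using QL fp0 by auto
    hence "(\<Sum>j<k. ind (Q j) p) = 0" by (intro sum.neutral) (auto simp: ind_def)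
    moreover have "0 \<le> (\<Sum>j<k'. ind (r j) p)" using indnn by (intro sum_nonneg) auto
    ultimately show ?thesis by (simp add: D_def ind_def)
  qed
  hence "f' p > 0" using epos fp0 by (simp add: f'_def)
  moreover have "f' \<in> Wa a" using Bprime[OF f f'feas] f'ef by blast
  ultimately show ?thesis using f'ef by blast
qed

end


lemma split_aux:
  fixes x y A B T U a t :: real
  assumes "A = T + (a - t) * U"
  shows "(x - y) * (A - B) = (x - y) * (T - B) + (a - t) * ((x - y) * U)"
  unfolding assms by (simp add: algebra_simps)

context net begin

lemma quant:
  assumes t: "t \<in> {0<..1}" and g: "g \<in> Wa t"
  shows "\<exists>\<delta>>0. \<forall>a\<in>{0..1}. t - \<delta> < a \<longrightarrow> a \<le> t \<longrightarrow> (\<forall>f\<in>Wa a. \<forall>e\<in>E. ef g e > 0 \<longrightarrow> ef f e > 0)"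
proof -
  have t01: "t \<in> {0..1}" using t by auto
  have gg: "g \<in> feasible_flows P" using g by (simp add: WE_def)
  define K where "K = (\<Sum>e\<in>E. C 1 e 1 + C 2 e 1)"
  have K0: "0 \<le> K" unfolding K_def using C_nonneg by (intro sum_nonneg add_nonneg_nonneg) auto
  define d where "d e = ef g e * (cb t e (ef g e) - cb t e 0)" for e
  have dpos: "d e > 0" if "e \<in> E" "ef g e > 0" for e
    using cb_strict[OF t01 that(1), of 0 "ef g e"] that by (simp add: d_def)
  define D0 where "D0 = Min (insert 1 (d ` {e\<in>E. ef g e > 0}))"
  have finD: "finite (insert 1 (d ` {e\<in>E. ef g e > 0}))" using finE by simp
  have D0pos: "D0 > 0" unfolding D0_def using finD dpos by (subst Min_gr_iff) auto
  have D0le: "D0 \<le> d e" if "e \<in> E" "ef g e > 0" for e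
    unfolding D0_def using finD that by (intro Min_le) auto
  define \<delta> where "\<delta> = D0 / (K + 1)"
  have dK: "\<delta> * (K + 1) = D0" using K0 by (simp add: \<delta>_def)
  have "\<delta> > 0" using D0pos K0 by (simp add: \<delta>_def)
  moreover have "\<forall>a\<in>{0..1}. t - \<delta> < a \<longrightarrow> a \<le> t \<longrightarrow> (\<forall>f\<in>Wa a. \<forall>e\<in>E. ef g e > 0 \<longrightarrow> ef f e > 0)"
  proof (intro ballI impI)
    fix a f e0 assume a: "a \<in> {0..1}" "t - \<delta> < a" "a \<le> t" and f: "f \<in> Wa a" and e0: "e0 \<in> E" "ef g e0 > 0"
    have ff: "f \<in> feasible_flows P" using f by (simp add: WE_def)
    show "ef f e0 > 0"
    proof (rule ccontr)
      assume "\<not> ef f e0 > 0"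
      hence x0: "ef f e0 = 0" using ef_nonneg[OF ff, of e0] by simp
      let ?x = "\<lambda>e. ef f e" and ?y = "\<lambda>e. ef g e"
      have split: "(?x e - ?y e) * (cb a e (?x e) - cb t e (?y e)) =
          (?x e - ?y e) * (cb t e (?x e) - cb t e (?y e)) + (a - t) * ((?x e - ?y e) * (C 1 e (?x e) - C 2 e (?x e)))" for e
      proof -
        have "cb a e (?x e) = cb t e (?x e) + (a - t) * (C 1 e (?x e) - C 2 e (?x e))"
          using cb_diff[of a e "?x e" t] by linarith
        thus ?thesis by (rule split_aux)
      qed
      have "(\<Sum>e\<in>E. (?x e - ?y e) * (cb t e (?x e) - cb t e (?y e))) + (a - t) * (\<Sum>e\<in>E. (?x e - ?y e) * (C 1 e (?x e) - C 2 e (?x e))) \<le> 0"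
        using VI[OF f g] by (simp add: split sum.distrib sum_distrib_left)
      moreover have "(\<Sum>e\<in>E. (?x e - ?y e) * (C 1 e (?x e) - C 2 e (?x e))) \<le> K"
        unfolding K_def
      proof (rule sum_mono)
        fix e assume e: "e \<in> E"
        have xy: "\<bar>?x e - ?y e\<bar> \<le> 1" using ef_nonneg[OF ff] ef_nonneg[OF gg] ef_le1[OF ff] ef_le1[OF gg]
          by (simp add: abs_le_iff) (smt (verit) ef_nonneg[OF ff, of e] ef_nonneg[OF gg, of e] ef_le1[OF ff, of e] ef_le1[OF gg, of e])
        have c1: "0 \<le> C 1 e (?x e)" "C 1 e (?x e) \<le> C 1 e 1" using C_nonneg[of 1 e] C_mono[of 1 e "?x e" 1] e ef_nonneg[OF ff] ef_le1[OF ff] by auto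
        have c2: "0 \<le> C 2 e (?x e)" "C 2 e (?x e) \<le> C 2 e 1" using C_nonneg[of 2 e] C_mono[of 2 e "?x e" 1] e ef_nonneg[OF ff] ef_le1[OF ff] by auto
        have cb: "\<bar>C 1 e (?x e) - C 2 e (?x e)\<bar> \<le> C 1 e 1 + C 2 e 1" using c1 c2 by (simp add: abs_le_iff)
        have "(?x e - ?y e) * (C 1 e (?x e) - C 2 e (?x e)) \<le> \<bar>?x e - ?y e\<bar> * \<bar>C 1 e (?x e) - C 2 e (?x e)\<bar>"
          by (simp add: abs_mult[symmetric])
        also have "\<dots> \<le> 1 * (C 1 e 1 + C 2 e 1)" using xy cb by (intro mult_mono) auto
        finally show "(?x e - ?y e) * (C 1 e (?x e) - C 2 e (?x e)) \<le> C 1 e 1 + C 2 e 1" by simp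
      qed
      hence "(t - a) * (\<Sum>e\<in>E. (?x e - ?y e) * (C 1 e (?x e) - C 2 e (?x e))) \<le> (t - a) * K"
        using a by (intro mult_left_mono) auto
      ultimately have 1: "(\<Sum>e\<in>E. (?x e - ?y e) * (cb t e (?x e) - cb t e (?y e))) \<le> (t - a) * K"
        by (simp add: algebra_simps)
      have nn: "\<forall>e\<in>E. 0 \<le> (?x e - ?y e) * (cb t e (?x e) - cb t e (?y e))"
      proof
        fix e assume e: "e \<in> E"
        show "0 \<le> (?x e - ?y e) * (cb t e (?x e) - cb t e (?y e))"
          by (rule prod_mono_nonneg[of "cb t e"]) (auto intro: cb_mono[OF t01 e] ef_nonneg[OF ff] ef_nonneg[OF gg])
      qed
      have "d e0 = (?x e0 - ?y e0) * (cb t e0 (?x e0) - cb t e0 (?y e0))"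
        using x0 by (simp add: d_def algebra_simps)
      also have "\<dots> \<le> (\<Sum>e\<in>E. (?x e - ?y e) * (cb t e (?x e) - cb t e (?y e)))"
        using nn e0 finE by (intro member_le_sum) auto
      finally have 2: "d e0 \<le> (t - a) * K" using 1 by linarith
      have "(t - a) * K \<le> (t - a) * (K + 1)" using a by (intro mult_left_mono) auto
      also have "\<dots> < \<delta> * (K + 1)" using a K0 by (intro mult_strict_right_mono) auto
      also have "\<dots> = D0" by (rule dK)
      also have "\<dots> \<le> d e0" using D0le e0 by blast
      finally show False using 2 by simp
    qed
  qed
  ultimately show ?thesis by blast
qed

lemma sameW:
  assumes "a \<in> {0..1}" "b \<in> {0..1}" "f \<in> Wa a" "f \<in> Wa b"
  shows "Wa a = Wa b"
proof
  show "Wa a \<subseteq> Wa b"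
  proof
    fix h assume h: "h \<in> Wa a"
    have "\<forall>e\<in>E. ef h e = ef f e" using U[OF assms(1) h assms(3)] .
    thus "h \<in> Wa b" using Bprime[OF assms(4)] h by (simp add: WE_def)
  qed
  show "Wa b \<subseteq> Wa a"
  proof
    fix h assume h: "h \<in> Wa b"
    have "\<forall>e\<in>E. ef h e = ef f e" using U[OF assms(2) h assms(4)] .
    thus "h \<in> Wa a" using Bprime[OF assms(3)] h by (simp add: WE_def)
  qed
qed

lemma lin:
  assumes "f \<in> feasible_flows P"
  shows "f \<in> Wa a \<longleftrightarrow> (\<forall>\<pi>\<in>P. f \<pi> > 0 \<longrightarrow> (\<forall>r\<in>P.
     a * (path_cost C P 1 \<pi> f - path_cost C P 1 r f) + (1 - a) * (path_cost C P 2 \<pi> f - path_cost C P 2 r f) \<le> 0))"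
  using assms by (simp add: WE_def exp_cost_gen pd_def algebra_simps)

lemma closed_T: "closed {a. f \<in> Wa a}" if "f \<in> feasible_flows P"
proof -
  have "{a. f \<in> Wa a} = (\<Inter>\<pi>\<in>{\<pi>\<in>P. f \<pi> > 0}. \<Inter>r\<in>P. {a.
     a * (path_cost C P 1 \<pi> f - path_cost C P 1 r f) + (1 - a) * (path_cost C P 2 \<pi> f - path_cost C P 2 r f) \<le> 0})"
    using lin[OF that] by auto
  moreover have "closed \<dots>"
    by (intro closed_INT ballI closed_Collect_le continuous_intros)
  ultimately show ?thesis by simp
qed

lemma lin_interp:
  fixes X Y t b :: real
  assumes "t * X + (1 - t) * Y \<le> 0" "X \<le> 0" "t \<le> b" "b \<le> 1" "0 \<le> t"
  shows "b * X + (1 - b) * Y \<le> 0"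
proof (cases "Y \<le> 0")
  case True
  have "b * X \<le> 0" using assms by (intro mult_nonneg_nonpos) auto
  moreover have "(1 - b) * Y \<le> 0" using assms True by (intro mult_nonneg_nonpos) auto
  ultimately show ?thesis by simp
next
  case False
  have "(b - t) * (X - Y) \<le> 0" using assms False by (intro mult_nonneg_nonpos) auto
  moreover have "b * X + (1 - b) * Y = (t * X + (1 - t) * Y) + (b - t) * (X - Y)" by (simp add: algebra_simps)
  ultimately show ?thesis using assms(1) by linarith
qed

lemma up_T:
  assumes ff: "f \<in> feasible_flows P" and t: "f \<in> Wa t" and one: "f \<in> Wa 1" and tb: "t \<le> b" "b \<le> 1" "0 \<le> t"
  shows "f \<in> Wa b"
  using lin[OF ff, of t] lin[OF ff, of 1] lin[OF ff, of b] t one lin_interp[OF _ _ tb(1,2) tb(3)] by simp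

lemma pd_simplex: "b \<in> {0..1} \<Longrightarrow> pd b \<in> prob_simplex 2"
proof -
  assume b: "b \<in> {0..1}"
  have "(\<Sum>i=1..2. pd b i) = 1" using sum12[of "pd b"] by (simp add: pd_def)
  thus ?thesis using b unfolding prob_simplex_def by (auto simp: pd_def)
qed

end


context net begin

lemma pt1: "WE 2 C P (point_dist 1) = Wa 1"
  by (rule WE_cong) (simp_all add: point_dist_def pd_def)
lemma pt2: "WE 2 C P (point_dist 2) = Wa 0"
  by (rule WE_cong) (simp_all add: point_dist_def pd_def)

lemma main:
  assumes ne: "WE 2 C P (point_dist 1) \<noteq> WE 2 C P (point_dist 2)"
  shows "\<exists>\<xi> \<eta>. \<xi> \<in> prob_simplex 2 \<and> \<eta> \<in> prob_simplex 2 \<and> \<xi> \<noteq> \<eta> \<and> \<xi> 1 > \<eta> 1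
     \<and> (\<forall>\<mu>\<in>{0..1}.
          WE 2 C P (\<lambda>i. \<mu> * point_dist 1 i + (1 - \<mu>) * \<xi> i)
          = WE 2 C P (point_dist 1))
     \<and> (\<forall>lam\<in>{0<..<1}. \<exists>f \<in> WE 2 C P (\<lambda>i. lam * \<xi> i + (1 - lam) * \<eta> i).
          f \<in> F_inf C P)"
proof -
  have ne': "Wa 1 \<noteq> Wa 0" using ne pt1 pt2 by simp
  have Pne: "P \<noteq> {}"
  proof
    assume "P = {}"
    hence "feasible_flows P = {}" by (simp add: feasible_flows_def)
    hence "Wa 1 = {}" "Wa 0 = {}" by (simp_all add: WE_def)
    thus False using ne' by simp
  qed
  obtain f1 where f1: "f1 \<in> Wa 1" using exists_WE[OF _ Pne, of 1] by auto
  obtain f0 where f0: "f0 \<in> Wa 0" using exists_WE[OF _ Pne, of 0] by auto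
  have f1f: "f1 \<in> feasible_flows P" using f1 by (simp add: WE_def)
  have f0f: "f0 \<in> feasible_flows P" using f0 by (simp add: WE_def)
  define T where "T = {0..1} \<inter> {a. f1 \<in> Wa a}"
  define T0 where "T0 = {0..1} \<inter> {a. f0 \<in> Wa a}"
  have cT: "closed T" unfolding T_def by (intro closed_Int closed_T[OF f1f]) simp
  have cT0: "closed T0" unfolding T0_def by (intro closed_Int closed_T[OF f0f]) simp
  have 1: "1 \<in> T" using f1 by (simp add: T_def)
  have 00: "0 \<in> T0" using f0 by (simp add: T0_def)
  define t where "t = Inf T"
  have Tne: "T \<noteq> {}" using 1 by blast
  have Tbd: "bdd_below T" by (auto simp: bdd_below_def T_def)
  have tT: "t \<in> T" unfolding t_def using closed_contains_Inf[OF Tne Tbd cT] .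
  have tle: "t \<le> a" if "a \<in> T" for a unfolding t_def using that
    by (intro cInf_lower) (auto simp: bdd_below_def T_def)
  define s where "s = Sup T0"
  have T0ne: "T0 \<noteq> {}" using 00 by blast
  have T0bd: "bdd_above T0" by (auto simp: bdd_above_def T0_def)
  have sT0: "s \<in> T0" unfolding s_def using closed_contains_Sup[OF T0ne T0bd cT0] .
  have sle: "a \<le> s" if "a \<in> T0" for a unfolding s_def using that
    by (intro cSup_upper) (auto simp: bdd_above_def T0_def)
  have WT: "Wa a = Wa 1" if "a \<in> T" for a
    using sameW[of a 1 f1] that f1 by (auto simp: T_def)
  have WT0: "Wa a = Wa 0" if "a \<in> T0" for a
    using sameW[of a 0 f0] that f0 by (auto simp: T0_def)
  have t01: "t \<in> {0..1}" using tT by (simp add: T_def)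
  have s01: "s \<in> {0..1}" using sT0 by (simp add: T0_def)
  have tpos: "t > 0"
  proof (rule ccontr)
    assume "\<not> t > 0" hence "t = 0" using t01 by simp
    hence "Wa 0 = Wa 1" using WT tT by simp
    thus False using ne' by simp
  qed
  have upT: "b \<in> T" if "t \<le> b" "b \<le> 1" for b
  proof -
    have "f1 \<in> Wa t" using tT by (simp add: T_def)
    hence "f1 \<in> Wa b" using up_T[OF f1f _ f1 that] t01 by simp
    thus ?thesis using that t01 by (simp add: T_def)
  qed
  have st: "s < t"
  proof (rule ccontr)
    assume "\<not> s < t"
    hence "s \<in> T" using upT s01 by simp
    hence "Wa s = Wa 1" "Wa s = Wa 0" using WT WT0 sT0 by auto
    thus False using ne' by simp
  qed
  obtain \<delta> where \<delta>: "\<delta> > 0" "\<forall>a\<in>{0..1}. t - \<delta> < a \<longrightarrow> a \<le> t \<longrightarrow> (\<forall>f\<in>Wa a. \<forall>e\<in>E. ef f1 e > 0 \<longrightarrow> ef f e > 0)"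
  proof -
    have "f1 \<in> Wa t" using tT by (simp add: T_def)
    moreover have "t \<in> {0<..1}" using tpos t01 by simp
    ultimately show ?thesis using quant that by blast
  qed
  define \<eta>1 where "\<eta>1 = max s (t - \<delta>/2)"
  have \<eta>1: "0 \<le> \<eta>1" "\<eta>1 < t" "s \<le> \<eta>1" "t - \<delta> < \<eta>1" using s01 st \<delta>(1) by (auto simp: \<eta>1_def)
  define \<xi> where "\<xi> = pd t"
  define \<eta> where "\<eta> = pd \<eta>1"
  have R: "R_use 2 C P (point_dist 1) = {\<pi>\<in>P. \<exists>g\<in>Wa 1. g \<pi> > 0}"
    unfolding R_use_def pt1 by simp
  have partI: "\<forall>\<mu>\<in>{0..1}. WE 2 C P (\<lambda>i. \<mu> * point_dist 1 i + (1 - \<mu>) * \<xi> i) = WE 2 C P (point_dist 1)"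
  proof
    fix \<mu> :: real assume \<mu>: "\<mu> \<in> {0..1}"
    define b where "b = \<mu> + (1 - \<mu>) * t"
    have "WE 2 C P (\<lambda>i. \<mu> * point_dist 1 i + (1 - \<mu>) * \<xi> i) = Wa b"
      by (rule WE_cong) (simp_all add: point_dist_def pd_def \<xi>_def b_def algebra_simps)
    moreover have "t \<le> b" "b \<le> 1"
    proof -
      have "0 \<le> \<mu> * (1 - t)" using \<mu> t01 by auto
      thus "t \<le> b" by (simp add: b_def algebra_simps)
      have "0 \<le> (1 - \<mu>) * (1 - t)" using \<mu> t01 by auto
      thus "b \<le> 1" by (simp add: b_def algebra_simps)
    qed
    ultimately show "WE 2 C P (\<lambda>i. \<mu> * point_dist 1 i + (1 - \<mu>) * \<xi> i) = WE 2 C P (point_dist 1)"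
      using WT[OF upT[OF \<open>t \<le> b\<close> \<open>b \<le> 1\<close>]] pt1 by simp
  qed
  have partII: "\<forall>lam\<in>{0<..<1}. \<exists>f \<in> WE 2 C P (\<lambda>i. lam * \<xi> i + (1 - lam) * \<eta> i). f \<in> F_inf C P"
  proof
    fix lam :: real assume lam: "lam \<in> {0<..<1}"
    define a where "a = lam * t + (1 - lam) * \<eta>1"
    have WEa: "WE 2 C P (\<lambda>i. lam * \<xi> i + (1 - lam) * \<eta> i) = Wa a"
      by (rule WE_cong) (simp_all add: pd_def \<xi>_def \<eta>_def a_def algebra_simps)
    have "0 < lam * (t - \<eta>1)" using lam \<eta>1 by auto
    hence a1: "\<eta>1 < a" by (simp add: a_def algebra_simps)
    have "0 < (1 - lam) * (t - \<eta>1)" using lam \<eta>1 by auto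
    hence a2: "a < t" by (simp add: a_def algebra_simps)
    have a01: "a \<in> {0..1}" using a1 a2 \<eta>1 t01 by auto
    obtain f where f: "f \<in> Wa a" using exists_WE[OF a01 Pne] by blast
    have ff: "f \<in> feasible_flows P" using f by (simp add: WE_def)
    define RR where "RR = {\<pi>\<in>P. \<exists>g\<in>Wa 1. g \<pi> > 0}"
    have finRR: "finite RR" using finP by (simp add: RR_def)
    have posR: "\<forall>e\<in>set \<pi>. ef f e > 0" if pR: "\<pi> \<in> RR" for \<pi>
    proof
      fix e assume e: "e \<in> set \<pi>"
      obtain g where g: "g \<in> Wa 1" "g \<pi> > 0" "\<pi> \<in> P" using pR by (auto simp: RR_def)
      have gf: "g \<in> feasible_flows P" using g by (simp add: WE_def)
      have eE: "e \<in> E" using P_props[OF g(3)] e by auto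
      have "ef g e > 0" using ef_ge_path[OF gf g(3) e] g by simp
      hence "ef f1 e > 0" using U[of 1 g f1] g f1 eE by simp
      moreover have "t - \<delta> < a" "a \<le> t" using a1 a2 \<eta>1 by linarith+
      ultimately show "ef f e > 0" using \<delta>(2)[rule_format, OF a01 \<open>t - \<delta> < a\<close> \<open>a \<le> t\<close> f eE] by blast
    qed
    have "\<forall>\<pi>\<in>RR. \<exists>h. h \<in> Wa a \<and> h \<pi> > 0 \<and> (\<forall>e\<in>E. ef h e = ef f e)"
    proof
      fix \<pi> assume p: "\<pi> \<in> RR"
      hence pP: "\<pi> \<in> P" by (simp add: RR_def)
      show "\<exists>h. h \<in> Wa a \<and> h \<pi> > 0 \<and> (\<forall>e\<in>E. ef h e = ef f e)"
        using splice[OF a01 f pP posR[OF p]] .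
    qed
    then obtain F where F: "\<forall>\<pi>\<in>RR. F \<pi> \<in> Wa a \<and> F \<pi> \<pi> > 0 \<and> (\<forall>e\<in>E. ef (F \<pi>) e = ef f e)"
      by (rule bchoice[THEN exE]) blast
    obtain f2 where f2: "f2 \<in> Wa a" "\<forall>\<pi>\<in>RR. f2 \<pi> > 0"
    proof (cases "RR = {}")
      case True thus ?thesis using that f by blast
    next
      case False
      define n where "n = real (card RR)"
      have npos: "n > 0" using False finRR by (simp add: n_def card_gt_0_iff)
      define f2 where "f2 \<rho> = (\<Sum>\<pi>\<in>RR. F \<pi> \<rho>) / n" for \<rho>
      have Ff: "F \<pi> \<in> feasible_flows P" if "\<pi> \<in> RR" for \<pi> using F that by (simp add: WE_def)
      have f2feas: "f2 \<in> feasible_flows P"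
      proof -
        have "\<forall>\<rho>\<in>P. 0 \<le> f2 \<rho>" unfolding f2_def using Ff npos
          by (auto intro!: divide_nonneg_pos sum_nonneg simp: feasible_flows_def)
        moreover have "\<forall>\<rho>. \<rho> \<notin> P \<longrightarrow> f2 \<rho> = 0" unfolding f2_def using Ff
          by (auto simp: feasible_flows_def)
        moreover have "(\<Sum>\<rho>\<in>P. f2 \<rho>) = 1"
        proof -
          have "(\<Sum>\<rho>\<in>P. f2 \<rho>) = (\<Sum>\<pi>\<in>RR. \<Sum>\<rho>\<in>P. F \<pi> \<rho>) / n"
            unfolding f2_def by (simp add: sum_divide_distrib[symmetric] sum.swap[of _ P])
          also have "\<dots> = (\<Sum>\<pi>\<in>RR. 1) / n" using Ff by (simp add: feasible_flows_def)
          finally show ?thesis using npos by (simp add: n_def)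
        qed
        ultimately show ?thesis by (simp add: feasible_flows_def)
      qed
      have f2ef: "\<forall>e\<in>E. ef f2 e = ef f e"
      proof
        fix e assume e: "e \<in> E"
        have "ef f2 e = (\<Sum>\<pi>\<in>RR. ef (F \<pi>) e) / n"
          unfolding edge_flow_def f2_def by (simp add: sum_divide_distrib[symmetric] sum.swap[of _ "{p \<in> P. e \<in> set p}"])
        also have "\<dots> = (\<Sum>\<pi>\<in>RR. ef f e) / n" using F e by simp
        finally show "ef f2 e = ef f e" using npos by (simp add: n_def)
      qed
      have "f2 \<in> Wa a" using Bprime[OF f f2feas f2ef] .
      moreover have "\<forall>\<pi>\<in>RR. f2 \<pi> > 0"
      proof
        fix \<pi> assume p: "\<pi> \<in> RR"
        have pP: "\<pi> \<in> P" using p by (simp add: RR_def)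
        have "F \<pi> \<pi> \<le> (\<Sum>\<pi>'\<in>RR. F \<pi>' \<pi>)"
          using p finRR Ff pP by (intro member_le_sum) (auto simp: feasible_flows_def)
        moreover have "F \<pi> \<pi> > 0" using F p by blast
        ultimately have "0 < (\<Sum>\<pi>'\<in>RR. F \<pi>' \<pi>)" by linarith
        thus "f2 \<pi> > 0" using npos by (simp add: f2_def)
      qed
      ultimately show ?thesis using that by blast
    qed
    have f2f: "f2 \<in> feasible_flows P" using f2 by (simp add: WE_def)
    have n1: "f2 \<notin> Wa 1"
    proof
      assume "f2 \<in> Wa 1"
      hence "Wa a = Wa 1" using sameW[of a 1 f2] a01 f2 by simp
      hence "a \<in> T" using f1 a01 by (simp add: T_def)
      hence "t \<le> a" by (rule tle)
      thus False using a2 by linarith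
    qed
    have n0: "f2 \<notin> Wa 0"
    proof
      assume "f2 \<in> Wa 0"
      hence "Wa a = Wa 0" using sameW[of a 0 f2] a01 f2 by simp
      hence "a \<in> T0" using f0 a01 by (simp add: T0_def)
      hence "a \<le> s" by (rule sle)
      thus False using a1 \<eta>1 by linarith
    qed
    have "f2 \<in> F_inf C P"
      unfolding F_inf_def R pt1 pt2 using f2f n1 n0 f2(2) unfolding RR_def by blast
    thus "\<exists>f \<in> WE 2 C P (\<lambda>i. lam * \<xi> i + (1 - lam) * \<eta> i). f \<in> F_inf C P"
      using WEa f2 by blast
  qed
  have "\<xi> \<in> prob_simplex 2" "\<eta> \<in> prob_simplex 2" using pd_simplex t01 \<eta>1 by (auto simp: \<xi>_def \<eta>_def)
  moreover have "\<xi> 1 > \<eta> 1" using \<eta>1 by (simp add: \<xi>_def \<eta>_def pd_def)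
  moreover hence "\<xi> \<noteq> \<eta>" by force
  ultimately show ?thesis using partI partII by (intro exI[of _ \<xi>] exI[of _ \<eta>]) simp
qed

end

theorem lemma6:
  fixes src dst :: "'e \<Rightarrow> 'v" and E :: "'e set" and vo vd :: 'v
    and C :: "nat \<Rightarrow> 'e \<Rightarrow> real \<Rightarrow> real"
  assumes "finite E"
    and "\<forall>s\<in>{1,2}. \<forall>e\<in>E. continuous_on {0..} (C s e)
            \<and> strict_mono_on {0..} (C s e) \<and> (\<forall>x\<ge>0. C s e x \<ge> 0)"
    and "WE 2 C (od_paths src dst E vo vd) (point_dist 1)
           \<noteq> WE 2 C (od_paths src dst E vo vd) (point_dist 2)"
  shows "\<exists>\<xi> \<eta>. \<xi> \<in> prob_simplex 2 \<and> \<eta> \<in> prob_simplex 2 \<and> \<xi> \<noteq> \<eta> \<and> \<xi> 1 > \<eta> 1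
     \<and> (\<forall>\<mu>\<in>{0..1}.
          WE 2 C (od_paths src dst E vo vd) (\<lambda>i. \<mu> * point_dist 1 i + (1 - \<mu>) * \<xi> i)
          = WE 2 C (od_paths src dst E vo vd) (point_dist 1))
     \<and> (\<forall>lam\<in>{0<..<1}. \<exists>f \<in> WE 2 C (od_paths src dst E vo vd) (\<lambda>i. lam * \<xi> i + (1 - lam) * \<eta> i).
          f \<in> F_inf C (od_paths src dst E vo vd))"
proof -
  interpret net src dst E vo vd C using assms(1,2) by unfold_locales
  show ?thesis using main[OF assms(3)] .
qed


end
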